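(* Let $F$ be a unitary $N=(2,2)$ full vertex operator superalgebra and $d=G^+_{-1/2}+\bar G^+_{-1/2}$. Then the map $\bigoplus_{p,q\in\mathbb R}C^{(p,q)}(F)_{cc}\to H(F,d)=\ker d/\mathrm{Im}\,d$, sending a vector to its cohomology class, is a well-defined linear isomorphism.
   Context: A unitary $N=(2,2)$ full VOA is a full vertex operator superalgebra $F=\bigoplus_{(h,\bar h)\in\mathbb R^2}F_{h,\bar h}$ (Moriwaki's axioms: real-analytic locality/associativity of $Y(a,\underline z)=\sum_{r,s}a(r,s)z^{-r-1}\bar z^{-s-1}$, vacuum $\mathbf 1$, $F_{0,0}=\mathbb C\mathbf 1$, finite-dimensional bounded-below bigrading with $F_{h,\bar h}=0$ unless $h-\bar h\in\frac12\mathbb Z$, conformal vectors $\omega\in F_{2,0},\bar\omega\in F_{0,2}$ giving commuting Virasoro actions $L(n),\bar L(n)$ of central charges $c,\bar c>0$ with $L(0),\bar L(0)$ the bigrading) with holomorphic $\tau^\pm\in F_{3/2,0}$, $J\in F_{1,0}$ and antiholomorphic $\bar\tau^\pm\in F_{0,3/2}$, $\bar J\in F_{0,1}$ whose modes $G^\pm_r,J_n$ ($Y(\tau^\pm,\underline z)=\sum_{r\in\frac12+\mathbb Z}G^\pm_rz^{-r-3/2}$, $Y(J,\underline z)=\sum J_nz^{-n-1}$) and $\bar G^\pm_r,\bar J_n$ satisfy two supercommuting copies of the $N=2$ Neveu–Schwarz relations ($[J_m,J_n]=\frac c3m\delta_{m+n,0}$, $[J_m,G^\pm_r]=\pm G^\pm_{m+r}$,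 $[L_m,G^\pm_r]=(\frac m2-r)G^\pm_{m+r}$, $[L_m,J_n]=-nJ_{m+n}$, $[G^\pm_r,G^\pm_s]_+=0$, $[G^+_r,G^-_s]_+=L_{r+s}+\frac12(r-s)J_{r+s}+\frac c6(r^2-\frac14)\delta_{r+s,0}$; barred with $\bar c$), $J_0,\bar J_0$ semisimple with real eigenvalues, $J_0-\bar J_0$ integral with $\exp(\pi i(J_0-\bar J_0))$ the parity operator; plus an invariant symmetric bilinear form ($(\mathbf 1,\mathbf 1)=1$, $(u,Y(a,\underline z)v)=(Y(e^{L(1)z+\bar L(1)\bar z}(-1)^{(L(0)-\bar L(0))+2(L(0)-\bar L(0))^2}z^{-2L(0)}\bar z^{-2\bar L(0)}a,\underline z^{-1})u,v)$) and an anti-linear involutive automorphism $\phi$ with $\phi(J)=-J,\phi(\tau^\pm)=\tau^\mp,\phi(\bar J)=-\bar J,\phi(\bar\tau^\pm)=-\bar\tau^\mp$ and $(\phi(\cdot),\cdot)$ positive definite. $C^{(p,q)}(F)_{cc}$ is the space of vectors $v$ with $J_0v=pv$, $\bar J_0v=qv$, $L_nv=\bar L_nv=J_nv=\bar J_nv=0$ ($n\ge1$), $G^\pm_rv=\bar G^\pm_rv=0$ ($r\ge\frac12$), and $G^+_{-1/2}v=\bar G^+_{-1/2}v=0$ (chiral-chiral primary vectors of charge $(p,q)$). *)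

theory Defs
  imports "HOL-Analysis.Analysis"
begin

text \<open>The underlying space F is the whole type 'v. The vertex operator
  Y(a,z) = sum_{r,s} a(r,s) z^(-r-1) zbar^(-s-1) is recorded through its modes:
  vY a r s b = a(r,s) b.\<close>

record 'v fvosa =
  cs    :: "complex \<Rightarrow> 'v \<Rightarrow> 'v"   \<comment> \<open>complex scalar multiplication on F\<close>
  vY    :: "'v \<Rightarrow> real \<Rightarrow> real \<Rightarrow> 'v \<Rightarrow> 'v"
  vac   :: 'v
  omg   :: 'v
  omgb  :: 'v
  taup  :: 'v
  taum  :: 'v
  Jvec  :: 'v
  taubp :: 'v
  taubm :: 'v
  Jbvec :: 'v
  cch   :: real
  ccb   :: real
  bform :: "'v \<Rightarrow> 'v \<Rightarrow> complex"
  phi   :: "'v \<Rightarrow> 'v"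

definition antilin :: "('v::ab_group_add) fvosa \<Rightarrow> ('v \<Rightarrow> 'v) \<Rightarrow> bool" where
  "antilin F f \<longleftrightarrow> (\<forall>x y. f (x + y) = f x + f y) \<and> (\<forall>c x. f (cs F c x) = cs F (cnj c) (f x))"

definition fin_dim :: "('v::ab_group_add) fvosa \<Rightarrow> 'v set \<Rightarrow> bool" where
  "fin_dim F S \<longleftrightarrow> (\<exists>B. finite B \<and> S \<subseteq> module.span (cs F) B)"

definition hZ :: "real set" where
  "hZ = {r. r - 1/2 \<in> \<int>}"

text \<open>z^a zbar^b for a - b integral: |z|^(2b) z^(a-b)\<close>
definition zpow :: "complex \<Rightarrow> real \<Rightarrow> real \<Rightarrow> complex" where
  "zpow z a b = (if z = 0 then 0 else complex_of_real (cmod z powr (2 * b)) * z powi \<lfloor>a - b\<rfloor>)"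

text \<open>real-analytic functions on an open subset of C^2 (regarded as R^4): locally given by
  an (unconditionally) convergent power series in z1-p1, conj(z1-p1), z2-p2, conj(z2-p2)\<close>
definition real_analytic_on2 :: "(complex \<times> complex \<Rightarrow> complex) \<Rightarrow> (complex \<times> complex) set \<Rightarrow> bool" where
  "real_analytic_on2 f S \<longleftrightarrow> open S \<and>
     (\<forall>p\<in>S. \<exists>e>0. ball p e \<subseteq> S \<and> (\<exists>c :: nat \<times> nat \<times> nat \<times> nat \<Rightarrow> complex.
        \<forall>w\<in>ball p e. ((\<lambda>(i,j,k,l). c (i,j,k,l) * (fst w - fst p) ^ i * cnj (fst w - fst p) ^ j
                         * (snd w - snd p) ^ k * cnj (snd w - snd p) ^ l) has_sum f w) UNIV))"

definition X2 :: "(complex \<times> complex) set" where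
  "X2 = {(z1, z2). z1 \<noteq> 0 \<and> z2 \<noteq> 0 \<and> z1 \<noteq> z2}"

text \<open>Y(omega,z) = sum L(n) z^(-n-2); Y(omegabar,z) = sum Lbar(n) zbar^(-n-2);
  Y(tau,z) = sum G_r z^(-r-3/2); Y(J,z) = sum J_n z^(-n-1); similarly barred.\<close>
definition Lm :: "'v fvosa \<Rightarrow> real \<Rightarrow> 'v \<Rightarrow> 'v" where
  "Lm F n = vY F (omg F) (n + 1) (-1)"
definition Lbm :: "'v fvosa \<Rightarrow> real \<Rightarrow> 'v \<Rightarrow> 'v" where
  "Lbm F n = vY F (omgb F) (-1) (n + 1)"
definition Gp :: "'v fvosa \<Rightarrow> real \<Rightarrow> 'v \<Rightarrow> 'v" where
  "Gp F r = vY F (taup F) (r + 1/2) (-1)"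
definition Gm :: "'v fvosa \<Rightarrow> real \<Rightarrow> 'v \<Rightarrow> 'v" where
  "Gm F r = vY F (taum F) (r + 1/2) (-1)"
definition Jm :: "'v fvosa \<Rightarrow> real \<Rightarrow> 'v \<Rightarrow> 'v" where
  "Jm F n = vY F (Jvec F) n (-1)"
definition Gbp :: "'v fvosa \<Rightarrow> real \<Rightarrow> 'v \<Rightarrow> 'v" where
  "Gbp F r = vY F (taubp F) (-1) (r + 1/2)"
definition Gbm :: "'v fvosa \<Rightarrow> real \<Rightarrow> 'v \<Rightarrow> 'v" where
  "Gbm F r = vY F (taubm F) (-1) (r + 1/2)"
definition Jbm :: "'v fvosa \<Rightarrow> real \<Rightarrow> 'v \<Rightarrow> 'v" where
  "Jbm F n = vY F (Jbvec F) (-1) n"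

definition Fgr :: "('v::ab_group_add) fvosa \<Rightarrow> real \<Rightarrow> real \<Rightarrow> 'v set" where
  "Fgr F h hb = {v. Lm F 0 v = cs F (complex_of_real h) (v) \<and> Lbm F 0 v = cs F (complex_of_real hb) v}"

definition Fpar :: "('v::ab_group_add) fvosa \<Rightarrow> bool \<Rightarrow> 'v set" where
  "Fpar F b = {v. \<exists>S g. finite S \<and> (\<forall>x\<in>S. g x \<in> Fgr F (fst x) (snd x) \<and> ((fst x - snd x \<in> \<int>) = (\<not> b)))
                 \<and> v = sum g S}"

text \<open>restricted dual F^v = direct sum of the duals of the F_(h,hb)\<close>
definition rdual :: "('v::ab_group_add) fvosa \<Rightarrow> ('v \<Rightarrow> complex) \<Rightarrow> bool" where
  "rdual F u \<longleftrightarrow> Vector_Spaces.linear (cs F) (*) u \<and> finite {(h, hb). \<exists>v\<in>Fgr F h hb. u v \<noteq> 0}"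

text \<open>series u(Y(a1,z1)Y(a2,z2)a3), u(Y(a2,z2)Y(a1,z1)a3), u(Y(Y(a1,z0)a2,z2)a3)\<close>
definition corr12 :: "('v::ab_group_add) fvosa \<Rightarrow> ('v \<Rightarrow> complex) \<Rightarrow> 'v \<Rightarrow> 'v \<Rightarrow> 'v \<Rightarrow> complex \<Rightarrow> complex
    \<Rightarrow> real \<times> real \<times> real \<times> real \<Rightarrow> complex" where
  "corr12 F u a1 a2 a3 z1 z2 = (\<lambda>(r, s, r', s'). u (vY F a1 r s (vY F a2 r' s' a3))
       * zpow z1 (- r - 1) (- s - 1) * zpow z2 (- r' - 1) (- s' - 1))"

definition corrA :: "('v::ab_group_add) fvosa \<Rightarrow> ('v \<Rightarrow> complex) \<Rightarrow> 'v \<Rightarrow> 'v \<Rightarrow> 'v \<Rightarrow> complex \<Rightarrow> complex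
    \<Rightarrow> real \<times> real \<times> real \<times> real \<Rightarrow> complex" where
  "corrA F u a1 a2 a3 z0 z2 = (\<lambda>(r, s, r', s'). u (vY F (vY F a1 r s a2) r' s' a3)
       * zpow z0 (- r - 1) (- s - 1) * zpow z2 (- r' - 1) (- s' - 1))"

definition hol_field :: "('v::ab_group_add) fvosa \<Rightarrow> 'v \<Rightarrow> bool" where
  "hol_field F a \<longleftrightarrow> (\<forall>r s. \<not> (s = -1 \<and> r \<in> \<int>) \<longrightarrow> vY F a r s = (\<lambda>v. 0))"
definition ahol_field :: "('v::ab_group_add) fvosa \<Rightarrow> 'v \<Rightarrow> bool" where
  "ahol_field F a \<longleftrightarrow> (\<forall>r s. \<not> (r = -1 \<and> s \<in> \<int>) \<longrightarrow> vY F a r s = (\<lambda>v. 0))"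

definition full_VOSA :: "('v::ab_group_add) fvosa \<Rightarrow> bool" where
  "full_VOSA F \<longleftrightarrow>
    vector_space (cs F) \<and>
    (\<forall>a r s. Vector_Spaces.linear (cs F) (cs F) (vY F a r s)) \<and> (\<forall>r s b. Vector_Spaces.linear (cs F) (cs F) (\<lambda>a. vY F a r s b)) \<and>
    (\<forall>v. \<exists>S g. finite S \<and> (\<forall>x\<in>S. g x \<in> Fgr F (fst x) (snd x)) \<and> v = sum g S) \<and>
    (\<forall>h hb. Fgr F h hb \<noteq> {0} \<longrightarrow> 2 * (h - hb) \<in> \<int>) \<and>
    (\<forall>h hb. fin_dim F (Fgr F h hb)) \<and>
    (\<exists>N. \<forall>h hb. Fgr F h hb \<noteq> {0} \<longrightarrow> N \<le> h \<and> N \<le> hb) \<and>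
    Fgr F 0 0 = range (\<lambda>c. cs F c (vac F)) \<and> vac F \<noteq> 0 \<and>
    (\<forall>a b r s. vY F a r s b \<noteq> 0 \<longrightarrow> r - s \<in> \<int>) \<and>
    (\<forall>a b H. finite {(r, s). vY F a r s b \<noteq> 0 \<and> (- r - 1) + (- s - 1) \<le> H}) \<and>
    (\<forall>r s v. vY F (vac F) r s v = (if r = -1 \<and> s = -1 then v else 0)) \<and>
    (\<forall>a r s. vY F a r s (vac F) \<noteq> 0 \<longrightarrow> (- r - 1 \<in> \<nat> \<and> - s - 1 \<in> \<nat>)) \<and>
    (\<forall>a. vY F a (-1) (-1) (vac F) = a) \<and>
    (\<forall>b1 b2 a1 a2 a3 u. a1 \<in> Fpar F b1 \<longrightarrow> a2 \<in> Fpar F b2 \<longrightarrow> rdual F u \<longrightarrow>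
       (\<exists>f. real_analytic_on2 f X2 \<and>
          (\<forall>z1 z2. 0 < cmod z2 \<and> cmod z2 < cmod z1 \<longrightarrow>
              (\<lambda>x. norm (corr12 F u a1 a2 a3 z1 z2 x)) summable_on UNIV \<and>
              infsum (corr12 F u a1 a2 a3 z1 z2) UNIV = f (z1, z2)) \<and>
          (\<forall>z1 z2. 0 < cmod z1 \<and> cmod z1 < cmod z2 \<longrightarrow>
              (\<lambda>x. norm (corr12 F u a2 a1 a3 z2 z1 x)) summable_on UNIV \<and>
              (if b1 \<and> b2 then -1 else 1) * infsum (corr12 F u a2 a1 a3 z2 z1) UNIV = f (z1, z2)) \<and>
          (\<forall>z0 z2. 0 < cmod z0 \<and> cmod z0 < cmod z2 \<longrightarrow>
              (\<lambda>x. norm (corrA F u a1 a2 a3 z0 z2 x)) summable_on UNIV \<and>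
              infsum (corrA F u a1 a2 a3 z0 z2) UNIV = f (z0 + z2, z2)))) \<and>
    omg F \<in> Fgr F 2 0 \<and> omgb F \<in> Fgr F 0 2 \<and> hol_field F (omg F) \<and> ahol_field F (omgb F) \<and>
    (\<forall>a. Lm F (-1) a = vY F a (-2) (-1) (vac F)) \<and> (\<forall>a. Lbm F (-1) a = vY F a (-1) (-2) (vac F)) \<and>
    0 < cch F \<and> 0 < ccb F \<and>
    (\<forall>m\<in>\<int>. \<forall>n\<in>\<int>. \<forall>v. Lm F m (Lm F n v) - Lm F n (Lm F m v)
        = cs F (complex_of_real (m - n)) (Lm F (m + n) v) + (if m + n = 0 then cs F (complex_of_real (cch F / 12 * (m ^ 3 - m))) (v) else 0)) \<and>
    (\<forall>m\<in>\<int>. \<forall>n\<in>\<int>. \<forall>v. Lbm F m (Lbm F n v) - Lbm F n (Lbm F m v)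
        = cs F (complex_of_real (m - n)) (Lbm F (m + n) v) + (if m + n = 0 then cs F (complex_of_real (ccb F / 12 * (m ^ 3 - m))) (v) else 0)) \<and>
    (\<forall>m\<in>\<int>. \<forall>n\<in>\<int>. \<forall>v. Lm F m (Lbm F n v) = Lbm F n (Lm F m v))"

definition N2_relations :: "('v::ab_group_add) fvosa \<Rightarrow> real \<Rightarrow> (real \<Rightarrow> 'v \<Rightarrow> 'v) \<Rightarrow> (real \<Rightarrow> 'v \<Rightarrow> 'v)
    \<Rightarrow> (real \<Rightarrow> 'v \<Rightarrow> 'v) \<Rightarrow> (real \<Rightarrow> 'v \<Rightarrow> 'v) \<Rightarrow> bool" where
  "N2_relations F c L J Gp' Gm' \<longleftrightarrow>
    (\<forall>m\<in>\<int>. \<forall>n\<in>\<int>. \<forall>v. J m (J n v) - J n (J m v) = (if m + n = 0 then cs F (complex_of_real (c / 3 * m)) (v) else 0)) \<and>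
    (\<forall>m\<in>\<int>. \<forall>r\<in>hZ. \<forall>v. J m (Gp' r v) - Gp' r (J m v) = Gp' (m + r) v) \<and>
    (\<forall>m\<in>\<int>. \<forall>r\<in>hZ. \<forall>v. J m (Gm' r v) - Gm' r (J m v) = - Gm' (m + r) v) \<and>
    (\<forall>m\<in>\<int>. \<forall>r\<in>hZ. \<forall>v. L m (Gp' r v) - Gp' r (L m v) = cs F (complex_of_real (m / 2 - r)) (Gp' (m + r) v)) \<and>
    (\<forall>m\<in>\<int>. \<forall>r\<in>hZ. \<forall>v. L m (Gm' r v) - Gm' r (L m v) = cs F (complex_of_real (m / 2 - r)) (Gm' (m + r) v)) \<and>
    (\<forall>m\<in>\<int>. \<forall>n\<in>\<int>. \<forall>v. L m (J n v) - J n (L m v) = cs F (complex_of_real (- n)) (J (m + n) v)) \<and>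
    (\<forall>r\<in>hZ. \<forall>s\<in>hZ. \<forall>v. Gp' r (Gp' s v) + Gp' s (Gp' r v) = 0) \<and>
    (\<forall>r\<in>hZ. \<forall>s\<in>hZ. \<forall>v. Gm' r (Gm' s v) + Gm' s (Gm' r v) = 0) \<and>
    (\<forall>r\<in>hZ. \<forall>s\<in>hZ. \<forall>v. Gp' r (Gm' s v) + Gm' s (Gp' r v)
        = L (r + s) v + cs F (complex_of_real ((r - s) / 2)) (J (r + s) v)
          + (if r + s = 0 then cs F (complex_of_real (c / 6 * (r ^ 2 - 1/4))) (v) else 0))"

definition even_hol :: "('v::ab_group_add) fvosa \<Rightarrow> ('v \<Rightarrow> 'v) set" where
  "even_hol F = {Lm F m | m. m \<in> \<int>} \<union> {Jm F m | m. m \<in> \<int>}"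
definition odd_hol :: "('v::ab_group_add) fvosa \<Rightarrow> ('v \<Rightarrow> 'v) set" where
  "odd_hol F = {Gp F r | r. r \<in> hZ} \<union> {Gm F r | r. r \<in> hZ}"
definition even_ahol :: "('v::ab_group_add) fvosa \<Rightarrow> ('v \<Rightarrow> 'v) set" where
  "even_ahol F = {Lbm F m | m. m \<in> \<int>} \<union> {Jbm F m | m. m \<in> \<int>}"
definition odd_ahol :: "('v::ab_group_add) fvosa \<Rightarrow> ('v \<Rightarrow> 'v) set" where
  "odd_ahol F = {Gbp F r | r. r \<in> hZ} \<union> {Gbm F r | r. r \<in> hZ}"

definition semisimple_real :: "('v::ab_group_add) fvosa \<Rightarrow> ('v \<Rightarrow> 'v) \<Rightarrow> bool" where
  "semisimple_real F A \<longleftrightarrow> (\<forall>v. \<exists>S g. finite S \<and> (\<forall>p\<in>S. A (g p) = cs F (complex_of_real p) (g p)) \<and> v = sum g S)"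

definition unitary_N22_full_VOSA :: "('v::ab_group_add) fvosa \<Rightarrow> bool" where
  "unitary_N22_full_VOSA F \<longleftrightarrow>
    full_VOSA F \<and>
    taup F \<in> Fgr F (3/2) 0 \<and> taum F \<in> Fgr F (3/2) 0 \<and> Jvec F \<in> Fgr F 1 0 \<and>
    taubp F \<in> Fgr F 0 (3/2) \<and> taubm F \<in> Fgr F 0 (3/2) \<and> Jbvec F \<in> Fgr F 0 1 \<and>
    hol_field F (taup F) \<and> hol_field F (taum F) \<and> hol_field F (Jvec F) \<and>
    ahol_field F (taubp F) \<and> ahol_field F (taubm F) \<and> ahol_field F (Jbvec F) \<and>
    N2_relations F (cch F) (Lm F) (Jm F) (Gp F) (Gm F) \<and>
    N2_relations F (ccb F) (Lbm F) (Jbm F) (Gbp F) (Gbm F) \<and>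
    (\<forall>A\<in>even_hol F \<union> odd_hol F. \<forall>B\<in>even_ahol F. \<forall>v. A (B v) = B (A v)) \<and>
    (\<forall>A\<in>even_hol F. \<forall>B\<in>odd_ahol F. \<forall>v. A (B v) = B (A v)) \<and>
    (\<forall>A\<in>odd_hol F. \<forall>B\<in>odd_ahol F. \<forall>v. A (B v) + B (A v) = 0) \<and>
    semisimple_real F (Jm F 0) \<and> semisimple_real F (Jbm F 0) \<and>
    (\<forall>v h hb p q. v \<noteq> 0 \<and> v \<in> Fgr F h hb \<and> Jm F 0 v = cs F (complex_of_real p) (v) \<and> Jbm F 0 v = cs F (complex_of_real q) v \<longrightarrow>
        p - q \<in> \<int> \<and> ((p - q) / 2 \<in> \<int> \<longleftrightarrow> h - hb \<in> \<int>)) \<and>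
    (\<forall>v. Vector_Spaces.linear (cs F) (*) (bform F v)) \<and> (\<forall>u v. bform F u v = bform F v u) \<and> bform F (vac F) (vac F) = 1 \<and>
    (\<forall>a h hb u v r0 s0 M. a \<in> Fgr F h hb \<longrightarrow>
        (\<forall>j k. M < j \<or> M < k \<longrightarrow> (Lm F 1 ^^ j) ((Lbm F 1 ^^ k) a) = 0) \<longrightarrow>
        bform F u (vY F a r0 s0 v)
          = (-1) powi \<lfloor>(h - hb) + 2 * (h - hb) ^ 2\<rfloor> *
            (\<Sum>j\<le>M. \<Sum>k\<le>M. complex_of_real (1 / (fact j * fact k)) *
               bform F (vY F ((Lm F 1 ^^ j) ((Lbm F 1 ^^ k) a))
                          (2 * h - real j - r0 - 2) (2 * hb - real k - s0 - 2) u) v)) \<and>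
    antilin F (phi F) \<and> (\<forall>v. phi F (phi F v) = v) \<and>
    (\<forall>a r s b. phi F (vY F a r s b) = vY F (phi F a) r s (phi F b)) \<and>
    phi F (vac F) = vac F \<and> phi F (omg F) = omg F \<and> phi F (omgb F) = omgb F \<and>
    phi F (Jvec F) = - Jvec F \<and> phi F (taup F) = taum F \<and> phi F (taum F) = taup F \<and>
    phi F (Jbvec F) = - Jbvec F \<and> phi F (taubp F) = - taubm F \<and> phi F (taubm F) = - taubp F \<and>
    (\<forall>v. v \<noteq> 0 \<longrightarrow> Im (bform F (phi F v) v) = 0 \<and> 0 < Re (bform F (phi F v) v))"

definition Ccc :: "('v::ab_group_add) fvosa \<Rightarrow> real \<Rightarrow> real \<Rightarrow> 'v set" where
  "Ccc F p q = {v. Jm F 0 v = cs F (complex_of_real p) (v) \<and> Jbm F 0 v = cs F (complex_of_real q) (v) \<and>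
     (\<forall>n\<in>\<int>. n \<ge> 1 \<longrightarrow> Lm F n v = 0 \<and> Lbm F n v = 0 \<and> Jm F n v = 0 \<and> Jbm F n v = 0) \<and>
     (\<forall>r\<in>hZ. r \<ge> 1/2 \<longrightarrow> Gp F r v = 0 \<and> Gm F r v = 0 \<and> Gbp F r v = 0 \<and> Gbm F r v = 0) \<and>
     Gp F (-1/2) v = 0 \<and> Gbp F (-1/2) v = 0}"

definition dop :: "('v::ab_group_add) fvosa \<Rightarrow> 'v \<Rightarrow> 'v" where
  "dop F v = Gp F (-1/2) v + Gbp F (-1/2) v"

definition kerd :: "('v::ab_group_add) fvosa \<Rightarrow> 'v set" where
  "kerd F = {v. dop F v = 0}"

definition imd :: "('v::ab_group_add) fvosa \<Rightarrow> 'v set" where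
  "imd F = range (dop F)"

text \<open>cohomology classes as cosets x + Im d; H(F,d) = ker d / Im d\<close>
definition cls :: "('v::ab_group_add) fvosa \<Rightarrow> 'v \<Rightarrow> 'v set" where
  "cls F x = {x + y | y. y \<in> imd F}"

definition Hcoh :: "('v::ab_group_add) fvosa \<Rightarrow> 'v set set" where
  "Hcoh F = cls F ` kerd F"

definition cset_add :: "'v::ab_group_add set \<Rightarrow> 'v set \<Rightarrow> 'v set" where
  "cset_add X Y = {x + y | x y. x \<in> X \<and> y \<in> Y}"
definition cset_scale :: "('v::ab_group_add) fvosa \<Rightarrow> complex \<Rightarrow> 'v set \<Rightarrow> 'v set" where
  "cset_scale F c X = {cs F c x + y | x y. x \<in> X \<and> y \<in> imd F}"

text \<open>the external direct sum of the C^(p,q)(F)_cc over (p,q) in R^2: finitely supported families\<close>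
definition CCsum :: "('v::ab_group_add) fvosa \<Rightarrow> (real \<times> real \<Rightarrow> 'v) set" where
  "CCsum F = {f. finite {pq. f pq \<noteq> 0} \<and> (\<forall>p q. f (p, q) \<in> Ccc F p q)}"

definition total :: "(real \<times> real \<Rightarrow> 'v::ab_group_add) \<Rightarrow> 'v" where
  "total f = sum f {pq. f pq \<noteq> 0}"

definition ccmap :: "('v::ab_group_add) fvosa \<Rightarrow> (real \<times> real \<Rightarrow> 'v) \<Rightarrow> 'v set" where
  "ccmap F f = cls F (total f)"

end

theory Submission
  imports Defs
begin


lemma lin_facts:
  assumes "Vector_Spaces.linear s1 s2 f"
  shows "f (x + y) = f x + f y" "f (s1 c x) = s2 c (f x)" "f 0 = 0" "f (- x) = - f x"
    "f (x - y) = f x - f y" "f (sum g A) = (\<Sum>a\<in>A. f (g a))"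
proof -
  have a: "\<And>x y. f (x + y) = f x + f y" "\<And>c x. f (s1 c x) = s2 c (f x)"
    using assms unfolding Vector_Spaces.linear_iff by auto
  interpret additive f by unfold_locales (rule a(1))
  show "f (x + y) = f x + f y" "f (s1 c x) = s2 c (f x)" "f 0 = 0" "f (- x) = - f x"
    "f (x - y) = f x - f y" "f (sum g A) = (\<Sum>a\<in>A. f (g a))"
    using a zero minus diff sum by auto
qed

locale U =
  fixes F :: "('v::ab_group_add) fvosa"
  assumes U: "unitary_N22_full_VOSA F"
begin

lemma FV: "full_VOSA F" using U unfolding unitary_N22_full_VOSA_def by blast

lemma vs: "vector_space (cs F)" using FV unfolding full_VOSA_def by (elim conjE) assumption

sublocale vs: vector_space "cs F" by (rule vs)

lemma vY_lin0: "\<forall>a r s. Vector_Spaces.linear (cs F) (cs F) (vY F a r s)" using FV unfolding full_VOSA_def by (elim conjE) assumption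
lemma vY_lin10: "\<forall>r s b. Vector_Spaces.linear (cs F) (cs F) (\<lambda>a. vY F a r s b)" using FV unfolding full_VOSA_def by (elim conjE) assumption
lemma vY_lin: "Vector_Spaces.linear (cs F) (cs F) (vY F a r s)" using vY_lin0 by blast
lemma vY_lin1: "Vector_Spaces.linear (cs F) (cs F) (\<lambda>a. vY F a r s b)" using vY_lin10 by blast

lemmas vY_add = lin_facts(1)[OF vY_lin] and vY_scale = lin_facts(2)[OF vY_lin]
  and vY_zero = lin_facts(3)[OF vY_lin] and vY_neg = lin_facts(4)[OF vY_lin]
  and vY_diff = lin_facts(5)[OF vY_lin] and vY_sum = lin_facts(6)[OF vY_lin]
lemmas vY1_neg = lin_facts(4)[OF vY_lin1]

lemma vac_ax: "\<forall>a r s. vY F a r s (vac F) \<noteq> 0 \<longrightarrow> (- r - 1 \<in> \<nat> \<and> - s - 1 \<in> \<nat>)"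
  using FV unfolding full_VOSA_def by (elim conjE) assumption
lemma vac_cr0: "\<forall>a. vY F a (-1) (-1) (vac F) = a"
  using FV unfolding full_VOSA_def by (elim conjE) assumption
lemma vac_cr: "vY F a (-1) (-1) (vac F) = a" using vac_cr0 by blast

lemma N2h: "N2_relations F (cch F) (Lm F) (Jm F) (Gp F) (Gm F)" using U unfolding unitary_N22_full_VOSA_def by blast
lemma N2b: "N2_relations F (ccb F) (Lbm F) (Jbm F) (Gbp F) (Gbm F)" using U unfolding unitary_N22_full_VOSA_def by blast


lemma UU: "unitary_N22_full_VOSA F" by (rule U)

lemma Fgr_dec: "\<forall>v. \<exists>S g. finite S \<and> (\<forall>x\<in>S. g x \<in> Fgr F (fst x) (snd x)) \<and> v = sum g S"
  using FV unfolding full_VOSA_def by (elim conjE) assumption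

lemma taup_gr: "taup F \<in> Fgr F (3/2) 0" using UU unfolding unitary_N22_full_VOSA_def by (elim conjE) assumption
lemma taum_gr: "taum F \<in> Fgr F (3/2) 0" using UU unfolding unitary_N22_full_VOSA_def by (elim conjE) assumption
lemma taubp_gr: "taubp F \<in> Fgr F 0 (3/2)" using UU unfolding unitary_N22_full_VOSA_def by (elim conjE) assumption
lemma taubm_gr: "taubm F \<in> Fgr F 0 (3/2)" using UU unfolding unitary_N22_full_VOSA_def by (elim conjE) assumption

lemma comm1: "\<forall>A\<in>even_hol F \<union> odd_hol F. \<forall>B\<in>even_ahol F. \<forall>v. A (B v) = B (A v)"
  using UU unfolding unitary_N22_full_VOSA_def by (elim conjE) assumption
lemma comm2: "\<forall>A\<in>even_hol F. \<forall>B\<in>odd_ahol F. \<forall>v. A (B v) = B (A v)"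
  using UU unfolding unitary_N22_full_VOSA_def by (elim conjE) assumption
lemma comm3: "\<forall>A\<in>odd_hol F. \<forall>B\<in>odd_ahol F. \<forall>v. A (B v) + B (A v) = 0"
  using UU unfolding unitary_N22_full_VOSA_def by (elim conjE) assumption
lemma ssJ: "semisimple_real F (Jm F 0)"
  using UU unfolding unitary_N22_full_VOSA_def by (elim conjE) assumption
lemma ssJb: "semisimple_real F (Jbm F 0)"
  using UU unfolding unitary_N22_full_VOSA_def by (elim conjE) assumption
lemma bf_lin0: "\<forall>v. Vector_Spaces.linear (cs F) (*) (bform F v)"
  using UU unfolding unitary_N22_full_VOSA_def by (elim conjE) assumption
lemma bf_sym0: "\<forall>u v. bform F u v = bform F v u"
  using UU unfolding unitary_N22_full_VOSA_def by (elim conjE) assumption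
lemma inv_ax: "\<forall>a h hb u v r0 s0 M. a \<in> Fgr F h hb \<longrightarrow>
        (\<forall>j k. M < j \<or> M < k \<longrightarrow> (Lm F 1 ^^ j) ((Lbm F 1 ^^ k) a) = 0) \<longrightarrow>
        bform F u (vY F a r0 s0 v)
          = (-1) powi \<lfloor>(h - hb) + 2 * (h - hb) ^ 2\<rfloor> *
            (\<Sum>j\<le>M. \<Sum>k\<le>M. complex_of_real (1 / (fact j * fact k)) *
               bform F (vY F ((Lm F 1 ^^ j) ((Lbm F 1 ^^ k) a))
                          (2 * h - real j - r0 - 2) (2 * hb - real k - s0 - 2) u) v)"
  using UU unfolding unitary_N22_full_VOSA_def by (elim conjE) assumption
lemma phi_antilin: "antilin F (phi F)"
  using UU unfolding unitary_N22_full_VOSA_def by (elim conjE) assumption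
lemma phi_hom0: "\<forall>a r s b. phi F (vY F a r s b) = vY F (phi F a) r s (phi F b)"
  using UU unfolding unitary_N22_full_VOSA_def by (elim conjE) assumption
lemma phi_val0: "phi F (taup F) = taum F"
  using UU unfolding unitary_N22_full_VOSA_def by (elim conjE) assumption
lemma phi_val1: "phi F (taum F) = taup F"
  using UU unfolding unitary_N22_full_VOSA_def by (elim conjE) assumption
lemma phi_val2: "phi F (taubp F) = - taubm F"
  using UU unfolding unitary_N22_full_VOSA_def by (elim conjE) assumption
lemma phi_val3: "phi F (taubm F) = - taubp F"
  using UU unfolding unitary_N22_full_VOSA_def by (elim conjE) assumption
lemma pos0: "\<forall>v. v \<noteq> 0 \<longrightarrow> Im (bform F (phi F v) v) = 0 \<and> 0 < Re (bform F (phi F v) v)"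
  using UU unfolding unitary_N22_full_VOSA_def by (elim conjE) assumption
lemma LLmix0: "\<forall>m\<in>\<int>. \<forall>n\<in>\<int>. \<forall>v. Lm F m (Lbm F n v) = Lbm F n (Lm F m v)"
  using FV unfolding full_VOSA_def by (elim conjE) assumption

end


lemma funpow_zero_gen:
  fixes f :: "'a::zero \<Rightarrow> 'a"
  assumes "f 0 = 0" shows "(f ^^ n) 0 = 0"
  using assms by (induction n) simp_all

lemma funpow_kill:
  fixes f :: "'a::zero \<Rightarrow> 'a"
  assumes "f 0 = 0" "f a = 0" "0 < n" shows "(f ^^ n) a = 0"
proof -
  obtain k where "n = Suc k" using assms(3) by (cases n) auto
  then show ?thesis using assms funpow_zero_gen[of f k] by (simp add: funpow_Suc_right del: funpow.simps(2))
qed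

lemma neg_notin_Nats: "(x::real) < 0 \<Longrightarrow> x \<notin> \<nat>"
  by (auto elim: Nats_cases)

context U begin

lemmas mode_defs = Lm_def Lbm_def Gp_def Gm_def Jm_def Gbp_def Gbm_def Jbm_def

lemma mode_lin: "Vector_Spaces.linear (cs F) (cs F) (Lm F n)" "Vector_Spaces.linear (cs F) (cs F) (Lbm F n)"
  "Vector_Spaces.linear (cs F) (cs F) (Gp F n)" "Vector_Spaces.linear (cs F) (cs F) (Gm F n)"
  "Vector_Spaces.linear (cs F) (cs F) (Jm F n)" "Vector_Spaces.linear (cs F) (cs F) (Gbp F n)"
  "Vector_Spaces.linear (cs F) (cs F) (Gbm F n)" "Vector_Spaces.linear (cs F) (cs F) (Jbm F n)"
  unfolding mode_defs by (rule vY_lin)+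

lemma bf_lin: "Vector_Spaces.linear (cs F) (*) (bform F v)" using bf_lin0 by blast
lemma bf_sym: "bform F u v = bform F v u" using bf_sym0 by blast

lemma bf2: "bform F u (x + y) = bform F u x + bform F u y"
  "bform F u (cs F c x) = c * bform F u x" "bform F u 0 = 0" "bform F u (- x) = - bform F u x"
  "bform F u (x - y) = bform F u x - bform F u y"
  "bform F u (sum g A) = (\<Sum>a\<in>A. bform F u (g a))"
  using lin_facts[OF bf_lin] by auto

lemma bf1: "bform F (x + y) u = bform F x u + bform F y u"
  "bform F (cs F c x) u = c * bform F x u" "bform F 0 u = 0" "bform F (- x) u = - bform F x u"
  "bform F (x - y) u = bform F x u - bform F y u"
  by (simp_all only: bf_sym[of _ u] bf2)

lemma phi_add: "phi F (x + y) = phi F x + phi F y" and phi_scale: "phi F (cs F c x) = cs F (cnj c) (phi F x)"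
  using phi_antilin unfolding antilin_def by auto

lemma phi_0: "phi F 0 = 0" and phi_neg: "phi F (- x) = - phi F x" and phi_diff: "phi F (x - y) = phi F x - phi F y"
  and phi_sum: "phi F (sum g A) = (\<Sum>a\<in>A. phi F (g a))"
proof -
  interpret additive "phi F" by unfold_locales (rule phi_add)
  show "phi F 0 = 0" "phi F (- x) = - phi F x" "phi F (x - y) = phi F x - phi F y"
    "phi F (sum g A) = (\<Sum>a\<in>A. phi F (g a))" by (rule zero minus diff sum)+
qed

lemma phi_hom: "phi F (vY F a r s b) = vY F (phi F a) r s (phi F b)" using phi_hom0 by blast

definition herm :: "'v \<Rightarrow> 'v \<Rightarrow> complex" where "herm u v = bform F (phi F u) v"

lemma herm2: "herm u (x + y) = herm u x + herm u y"
  "herm u (cs F c x) = c * herm u x" "herm u 0 = 0" "herm u (- x) = - herm u x"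
  "herm u (x - y) = herm u x - herm u y"
  unfolding herm_def by (rule bf2)+

lemma herm1: "herm (x + y) u = herm x u + herm y u" "herm 0 u = 0"
  unfolding herm_def by (simp_all add: phi_add phi_0 bf1)

lemma herm_pos: "v \<noteq> 0 \<Longrightarrow> Im (herm v v) = 0 \<and> 0 < Re (herm v v)"
  using pos0 unfolding herm_def by blast

lemma herm_nn: "Im (herm v v) = 0 \<and> 0 \<le> Re (herm v v)"
  using herm_pos[of v] by (cases "v = 0") (auto simp: herm1)

lemma herm_sum0: assumes "Re (herm a a) + Re (herm b b) = 0" shows "a = 0" "b = 0"
  using herm_nn[of a] herm_nn[of b] herm_pos[of a] herm_pos[of b] assms by force+

lemma herm_self0: assumes "herm a a = 0" shows "a = 0"
  using herm_pos[of a] assms by force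

lemma vac_zero: "- r - 1 < 0 \<Longrightarrow> vY F a r s (vac F) = 0"
  using vac_ax neg_notin_Nats by blast

end


lemma hZ_iff: "r \<in> hZ \<longleftrightarrow> r - 1/2 \<in> \<int>" by (simp add: hZ_def)

context
  fixes F :: "('v::ab_group_add) fvosa" and c :: real and L J P M :: "real \<Rightarrow> 'v \<Rightarrow> 'v"
  assumes N2: "N2_relations F c L J P M"
begin

lemma N2_JJ: assumes "m \<in> \<int>" "n \<in> \<int>" shows "J m (J n v) = J n (J m v) + (if m + n = 0 then cs F (complex_of_real (c / 3 * m)) v else 0)"
proof -
  have "\<forall>m\<in>\<int>. \<forall>n\<in>\<int>. \<forall>v. J m (J n v) - J n (J m v) = (if m + n = 0 then cs F (complex_of_real (c / 3 * m)) v else 0)" using N2 unfolding N2_relations_def by (elim conjE) assumption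
  then have "J m (J n v) - J n (J m v) = (if m + n = 0 then cs F (complex_of_real (c / 3 * m)) v else 0)" using assms by blast
  then show ?thesis by (simp add: diff_eq_eq add.commute)
qed
lemma N2_JP: assumes "m \<in> \<int>" "r \<in> hZ" shows "J m (P r v) = P r (J m v) + P (m + r) v"
proof -
  have "\<forall>m\<in>\<int>. \<forall>r\<in>hZ. \<forall>v. J m (P r v) - P r (J m v) = P (m + r) v" using N2 unfolding N2_relations_def by (elim conjE) assumption
  then have "J m (P r v) - P r (J m v) = P (m + r) v" using assms by blast
  then show ?thesis by (simp add: diff_eq_eq add.commute)
qed
lemma N2_JM: assumes "m \<in> \<int>" "r \<in> hZ" shows "J m (M r v) = M r (J m v) - M (m + r) v"
proof -
  have "\<forall>m\<in>\<int>. \<forall>r\<in>hZ. \<forall>v. J m (M r v) - M r (J m v) = - M (m + r) v" using N2 unfolding N2_relations_def by (elim conjE) assumption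
  then have "J m (M r v) - M r (J m v) = - M (m + r) v" using assms by blast
  then show ?thesis by (simp add: diff_eq_eq add.commute)
qed
lemma N2_LP: assumes "m \<in> \<int>" "r \<in> hZ" shows "L m (P r v) = P r (L m v) + cs F (complex_of_real (m / 2 - r)) (P (m + r) v)"
proof -
  have "\<forall>m\<in>\<int>. \<forall>r\<in>hZ. \<forall>v. L m (P r v) - P r (L m v) = cs F (complex_of_real (m / 2 - r)) (P (m + r) v)" using N2 unfolding N2_relations_def by (elim conjE) assumption
  then have "L m (P r v) - P r (L m v) = cs F (complex_of_real (m / 2 - r)) (P (m + r) v)" using assms by blast
  then show ?thesis by (simp add: diff_eq_eq add.commute)
qed
lemma N2_LM: assumes "m \<in> \<int>" "r \<in> hZ" shows "L m (M r v) = M r (L m v) + cs F (complex_of_real (m / 2 - r)) (M (m + r) v)"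
proof -
  have "\<forall>m\<in>\<int>. \<forall>r\<in>hZ. \<forall>v. L m (M r v) - M r (L m v) = cs F (complex_of_real (m / 2 - r)) (M (m + r) v)" using N2 unfolding N2_relations_def by (elim conjE) assumption
  then have "L m (M r v) - M r (L m v) = cs F (complex_of_real (m / 2 - r)) (M (m + r) v)" using assms by blast
  then show ?thesis by (simp add: diff_eq_eq add.commute)
qed
lemma N2_LJ: assumes "m \<in> \<int>" "n \<in> \<int>" shows "L m (J n v) = J n (L m v) + cs F (complex_of_real (- n)) (J (m + n) v)"
proof -
  have "\<forall>m\<in>\<int>. \<forall>n\<in>\<int>. \<forall>v. L m (J n v) - J n (L m v) = cs F (complex_of_real (- n)) (J (m + n) v)" using N2 unfolding N2_relations_def by (elim conjE) assumption
  then have "L m (J n v) - J n (L m v) = cs F (complex_of_real (- n)) (J (m + n) v)" using assms by blast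
  then show ?thesis by (simp add: diff_eq_eq add.commute)
qed
lemma N2_PP0: "\<forall>r\<in>hZ. \<forall>s\<in>hZ. \<forall>v. P r (P s v) + P s (P r v) = 0"
  using N2 unfolding N2_relations_def by (elim conjE) assumption
lemma N2_PP: "r \<in> hZ \<Longrightarrow> s \<in> hZ \<Longrightarrow> P r (P s v) + P s (P r v) = 0"
  using N2_PP0 by blast
lemma N2_PM0: "\<forall>r\<in>hZ. \<forall>s\<in>hZ. \<forall>v. P r (M s v) + M s (P r v)
        = L (r + s) v + cs F (complex_of_real ((r - s) / 2)) (J (r + s) v)
          + (if r + s = 0 then cs F (complex_of_real (c / 6 * (r ^ 2 - 1/4))) (v) else 0)"
  using N2 unfolding N2_relations_def by (elim conjE) assumption
lemma N2_PM: "r \<in> hZ \<Longrightarrow> s \<in> hZ \<Longrightarrow> P r (M s v) + M s (P r v)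
        = L (r + s) v + cs F (complex_of_real ((r - s) / 2)) (J (r + s) v)
          + (if r + s = 0 then cs F (complex_of_real (c / 6 * (r ^ 2 - 1/4))) (v) else 0)"
  using N2_PM0 by blast
end

context U begin

lemma vac_zero': "- r - 1 < 0 \<or> - s - 1 < 0 \<Longrightarrow> vY F a r s (vac F) = 0"
  using vac_ax neg_notin_Nats by blast

lemma hZ_simps: "(- (3/2)::real) \<in> hZ" "(- (1/2)::real) \<in> hZ" "(1/2::real) \<in> hZ"
  by (simp_all add: hZ_iff)

lemma Z1: "(1::real) \<in> \<int>" by simp

lemma taup_vac: "Gp F (- (3/2)) (vac F) = taup F" and taum_vac: "Gm F (- (3/2)) (vac F) = taum F"
  and taubp_vac: "Gbp F (- (3/2)) (vac F) = taubp F" and taubm_vac: "Gbm F (- (3/2)) (vac F) = taubm F"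
  unfolding mode_defs by (simp_all add: vac_cr)

lemma L1vac: "Lm F 1 (vac F) = 0" "Lbm F 1 (vac F) = 0" unfolding mode_defs by (simp_all add: vac_zero')
lemma Ghvac: "Gp F (- (1/2)) (vac F) = 0" "Gm F (- (1/2)) (vac F) = 0" "Gbp F (- (1/2)) (vac F) = 0" "Gbm F (- (1/2)) (vac F) = 0"
  unfolding mode_defs by (simp_all add: vac_zero')

lemmas mzero = lin_facts(3)[OF mode_lin(1)] lin_facts(3)[OF mode_lin(2)] lin_facts(3)[OF mode_lin(3)]
  lin_facts(3)[OF mode_lin(4)] lin_facts(3)[OF mode_lin(5)] lin_facts(3)[OF mode_lin(6)]
  lin_facts(3)[OF mode_lin(7)] lin_facts(3)[OF mode_lin(8)]

lemma L1_taup: "Lm F 1 (taup F) = 0"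
  using N2_LP[OF N2h Z1 hZ_simps(1), of "vac F"] by (simp add: taup_vac L1vac Ghvac mzero vs.scale_zero_right)
lemma L1_taum: "Lm F 1 (taum F) = 0"
  using N2_LM[OF N2h Z1 hZ_simps(1), of "vac F"] by (simp add: taum_vac L1vac Ghvac mzero vs.scale_zero_right)
lemma Lb1_taubp: "Lbm F 1 (taubp F) = 0"
  using N2_LP[OF N2b Z1 hZ_simps(1), of "vac F"] by (simp add: taubp_vac L1vac Ghvac mzero vs.scale_zero_right)
lemma Lb1_taubm: "Lbm F 1 (taubm F) = 0"
  using N2_LM[OF N2b Z1 hZ_simps(1), of "vac F"] by (simp add: taubm_vac L1vac Ghvac mzero vs.scale_zero_right)

lemma mem_hol: "Gp F r \<in> odd_hol F" "Gm F r \<in> odd_hol F" if "r \<in> hZ" using that unfolding odd_hol_def by auto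
lemma mem_ahol: "Gbp F r \<in> odd_ahol F" "Gbm F r \<in> odd_ahol F" if "r \<in> hZ" using that unfolding odd_ahol_def by auto
lemma mem_ehol: "Lm F m \<in> even_hol F" "Jm F m \<in> even_hol F" if "m \<in> \<int>" using that unfolding even_hol_def by auto
lemma mem_eahol: "Lbm F m \<in> even_ahol F" "Jbm F m \<in> even_ahol F" if "m \<in> \<int>" using that unfolding even_ahol_def by auto

lemma comm_oe: "A \<in> odd_hol F \<Longrightarrow> B \<in> even_ahol F \<Longrightarrow> A (B v) = B (A v)" using comm1 by blast
lemma comm_ee: "A \<in> even_hol F \<Longrightarrow> B \<in> even_ahol F \<Longrightarrow> A (B v) = B (A v)" using comm1 by blast
lemma comm_eo: "A \<in> even_hol F \<Longrightarrow> B \<in> odd_ahol F \<Longrightarrow> A (B v) = B (A v)" using comm2 by blast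
lemma comm_oo: "A \<in> odd_hol F \<Longrightarrow> B \<in> odd_ahol F \<Longrightarrow> A (B v) + B (A v) = 0" using comm3 by blast

lemma Lb1_taup: "Lbm F 1 (taup F) = 0"
  using comm_oe[OF mem_hol(1)[OF hZ_simps(1)] mem_eahol(1)[OF Z1], of "vac F"]
  by (simp add: taup_vac L1vac mzero)
lemma Lb1_taum: "Lbm F 1 (taum F) = 0"
  using comm_oe[OF mem_hol(2)[OF hZ_simps(1)] mem_eahol(1)[OF Z1], of "vac F"]
  by (simp add: taum_vac L1vac mzero)
lemma L1_taubp: "Lm F 1 (taubp F) = 0"
  using comm_eo[OF mem_ehol(1)[OF Z1] mem_ahol(1)[OF hZ_simps(1)], of "vac F"]
  by (simp add: taubp_vac L1vac mzero)
lemma L1_taubm: "Lm F 1 (taubm F) = 0"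
  using comm_eo[OF mem_ehol(1)[OF Z1] mem_ahol(2)[OF hZ_simps(1)], of "vac F"]
  by (simp add: taubm_vac L1vac mzero)

lemma kill_prem:
  assumes "Lm F 1 a = 0" "Lbm F 1 a = 0"
  shows "\<forall>j k. (0::nat) < j \<or> 0 < k \<longrightarrow> (Lm F 1 ^^ j) ((Lbm F 1 ^^ k) a) = 0"
proof (intro allI impI)
  fix j k :: nat assume "0 < j \<or> 0 < k"
  then show "(Lm F 1 ^^ j) ((Lbm F 1 ^^ k) a) = 0"
  proof
    assume "0 < k"
    then have "(Lbm F 1 ^^ k) a = 0" using funpow_kill[of "Lbm F 1" a k] assms mzero by blast
    then show ?thesis using funpow_zero_gen[of "Lm F 1" j] mzero by simp
  next
    assume j: "0 < j"
    show ?thesis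
    proof (cases "k = 0")
      case True then show ?thesis using funpow_kill[of "Lm F 1" a j] assms mzero j by simp
    next
      case False
      then have "(Lbm F 1 ^^ k) a = 0" using funpow_kill[of "Lbm F 1" a k] assms mzero by blast
      then show ?thesis using funpow_zero_gen[of "Lm F 1" j] mzero by simp
    qed
  qed
qed

lemma inv_inst:
  assumes "a \<in> Fgr F h hb" "Lm F 1 a = 0" "Lbm F 1 a = 0"
  shows "bform F u (vY F a r0 s0 v) = (-1) powi \<lfloor>(h - hb) + 2 * (h - hb) ^ 2\<rfloor> *
            bform F (vY F a (2 * h - r0 - 2) (2 * hb - s0 - 2) u) v"
  using inv_ax[rule_format (no_asm), OF assms(1) kill_prem[OF assms(2,3)], of u r0 s0 v] by simp

lemma adj_Gp: "bform F u (Gp F r v) = bform F (Gp F (-r) u) v"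
  unfolding Gp_def using inv_inst[OF taup_gr L1_taup Lb1_taup, of u "r + 1/2" "-1" v]
  by (simp add: power2_eq_square algebra_simps)
lemma adj_Gm: "bform F u (Gm F r v) = bform F (Gm F (-r) u) v"
  unfolding Gm_def using inv_inst[OF taum_gr L1_taum Lb1_taum, of u "r + 1/2" "-1" v]
  by (simp add: power2_eq_square algebra_simps)
lemma adj_Gbp: "bform F u (Gbp F r v) = - bform F (Gbp F (-r) u) v"
  unfolding Gbp_def using inv_inst[OF taubp_gr L1_taubp Lb1_taubp, of u "-1" "r + 1/2" v]
  by (simp add: power2_eq_square algebra_simps)
lemma adj_Gbm: "bform F u (Gbm F r v) = - bform F (Gbm F (-r) u) v"
  unfolding Gbm_def using inv_inst[OF taubm_gr L1_taubm Lb1_taubm, of u "-1" "r + 1/2" v]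
  by (simp add: power2_eq_square algebra_simps)

lemma phi_Gm: "phi F (Gm F r u) = Gp F r (phi F u)" unfolding mode_defs by (simp add: phi_hom phi_val1)
lemma phi_Gp: "phi F (Gp F r u) = Gm F r (phi F u)" unfolding mode_defs by (simp add: phi_hom phi_val0)
lemma phi_Gbm: "phi F (Gbm F r u) = - Gbp F r (phi F u)" unfolding mode_defs by (simp add: phi_hom phi_val3 vY1_neg)
lemma phi_Gbp: "phi F (Gbp F r u) = - Gbm F r (phi F u)" unfolding mode_defs by (simp add: phi_hom phi_val2 vY1_neg)

lemma hadj: "herm u (Gp F r v) = herm (Gm F (-r) u) v" "herm u (Gm F r v) = herm (Gp F (-r) u) v"
  "herm u (Gbp F r v) = herm (Gbm F (-r) u) v" "herm u (Gbm F r v) = herm (Gbp F (-r) u) v"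
  unfolding herm_def by (simp_all add: adj_Gp adj_Gm adj_Gbp adj_Gbm phi_Gm phi_Gp phi_Gbm phi_Gbp bf1)

end


context U begin

lemma cs_comb: "cs F (complex_of_real a) v + cs F (complex_of_real b) v = cs F (complex_of_real (a + b)) v"
  by (simp add: vs.scale_left_distrib)

lemma cs_comb1: "cs F (complex_of_real a) v + v = cs F (complex_of_real (a + 1)) v"
  by (simp add: vs.scale_left_distrib)

lemma cs_comb2: "cs F (complex_of_real a) v - v = cs F (complex_of_real (a - 1)) v"
  by (simp add: vs.scale_left_diff_distrib)

context
  fixes c :: real and L J P M :: "real \<Rightarrow> 'v \<Rightarrow> 'v"
  assumes N2: "N2_relations F c L J P M"
  and aP: "\<And>u v r. herm u (P r v) = herm (M (-r) u) v"
  and aM: "\<And>u v r. herm u (M r v) = herm (P (-r) u) v"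
  and linL: "\<And>n. Vector_Spaces.linear (cs F) (cs F) (L n)"
  and linJ: "\<And>n. Vector_Spaces.linear (cs F) (cs F) (J n)"
  and linP: "\<And>n. Vector_Spaces.linear (cs F) (cs F) (P n)"
  and linM: "\<And>n. Vector_Spaces.linear (cs F) (cs F) (M n)"
  and LL0: "\<forall>m\<in>\<int>. \<forall>n\<in>\<int>. \<forall>v. L m (L n v) - L n (L m v)
        = cs F (complex_of_real (m - n)) (L (m + n) v) + (if m + n = 0 then cs F (complex_of_real (c / 12 * (m ^ 3 - m))) (v) else 0)"
begin

lemma LL: "m \<in> \<int> \<Longrightarrow> n \<in> \<int> \<Longrightarrow> L m (L n v) - L n (L m v)
        = cs F (complex_of_real (m - n)) (L (m + n) v) + (if m + n = 0 then cs F (complex_of_real (c / 12 * (m ^ 3 - m))) (v) else 0)"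
  using LL0 by blast

lemma bid1:
  assumes "L 0 x = cs F (complex_of_real a) x" "J 0 x = cs F (complex_of_real b) x"
  shows "Re (herm (M (1/2) x) (M (1/2) x)) + Re (herm (P (-(1/2)) x) (P (-(1/2)) x)) = (a - b/2) * Re (herm x x)"
proof -
  have e: "P (-(1/2)) (M (1/2) x) + M (1/2) (P (-(1/2)) x) = L 0 x + cs F (complex_of_real (-(1/2))) (J 0 x)"
    using N2_PM[OF N2 hZ_simps(2) hZ_simps(3), of x] by (simp add: vs.scale_zero_left power2_eq_square)
  have "herm x (P (-(1/2)) (M (1/2) x) + M (1/2) (P (-(1/2)) x))
      = herm (M (1/2) x) (M (1/2) x) + herm (P (-(1/2)) x) (P (-(1/2)) x)"
    by (simp add: herm2 aP aM)
  also have "herm x (P (-(1/2)) (M (1/2) x) + M (1/2) (P (-(1/2)) x)) = complex_of_real (a - b/2) * herm x x"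
    unfolding e assms by (simp add: herm2 vs.scale_scale algebra_simps)
  finally have "complex_of_real (a - b/2) * herm x x = herm (M (1/2) x) (M (1/2) x) + herm (P (-(1/2)) x) (P (-(1/2)) x)" .
  then have "Re (complex_of_real (a - b/2) * herm x x) = Re (herm (M (1/2) x) (M (1/2) x) + herm (P (-(1/2)) x) (P (-(1/2)) x))"
    by simp
  then show ?thesis by simp
qed

lemma bid2:
  assumes "L 0 x = cs F (complex_of_real a) x" "J 0 x = cs F (complex_of_real b) x"
  shows "Re (herm (M (-(1/2)) x) (M (-(1/2)) x)) + Re (herm (P (1/2) x) (P (1/2) x)) = (a + b/2) * Re (herm x x)"
proof -
  have e: "P (1/2) (M (-(1/2)) x) + M (-(1/2)) (P (1/2) x) = L 0 x + cs F (complex_of_real (1/2)) (J 0 x)"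
    using N2_PM[OF N2 hZ_simps(3) hZ_simps(2), of x] by (simp add: vs.scale_zero_left power2_eq_square)
  have "herm x (P (1/2) (M (-(1/2)) x) + M (-(1/2)) (P (1/2) x))
      = herm (M (-(1/2)) x) (M (-(1/2)) x) + herm (P (1/2) x) (P (1/2) x)"
    by (simp add: herm2 aP aM)
  also have "herm x (P (1/2) (M (-(1/2)) x) + M (-(1/2)) (P (1/2) x)) = complex_of_real (a + b/2) * herm x x"
    unfolding e assms by (simp add: herm2 vs.scale_scale algebra_simps)
  finally have "complex_of_real (a + b/2) * herm x x = herm (M (-(1/2)) x) (M (-(1/2)) x) + herm (P (1/2) x) (P (1/2) x)" .
  then have "Re (complex_of_real (a + b/2) * herm x x) = Re (herm (M (-(1/2)) x) (M (-(1/2)) x) + herm (P (1/2) x) (P (1/2) x))"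
    by simp
  then show ?thesis by simp
qed

lemma ubound:
  assumes "x \<noteq> 0" "L 0 x = cs F (complex_of_real a) x" "J 0 x = cs F (complex_of_real b) x"
  shows "b/2 \<le> a" "- b/2 \<le> a"
proof -
  have p: "0 < Re (herm x x)" using herm_pos[OF assms(1)] by blast
  have "0 \<le> (a - b/2) * Re (herm x x)" using bid1[OF assms(2,3)] herm_nn by (metis add_nonneg_nonneg)
  then show "b/2 \<le> a" using p by (simp add: zero_le_mult_iff)
  have "0 \<le> (a + b/2) * Re (herm x x)" using bid2[OF assms(2,3)] herm_nn by (metis add_nonneg_nonneg)
  then show "- b/2 \<le> a" using p by (simp add: zero_le_mult_iff)
qed

lemma harm:
  assumes "L 0 x = cs F (complex_of_real a) x" "J 0 x = cs F (complex_of_real b) x" "a = b/2"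
  shows "M (1/2) x = 0" "P (-(1/2)) x = 0"
  using herm_sum0[of "M (1/2) x" "P (-(1/2)) x"] bid1[OF assms(1,2)] assms(3) by auto

lemma Z0: "(0::real) \<in> \<int>" by simp

lemma sh_L:
  assumes "L 0 x = cs F (complex_of_real h) x" "J 0 x = cs F (complex_of_real p) x" "n \<in> \<int>" "n \<noteq> 0"
  shows "L 0 (L n x) = cs F (complex_of_real (h - n)) (L n x)" "J 0 (L n x) = cs F (complex_of_real p) (L n x)"
proof -
  have "L 0 (L n x) = L n (L 0 x) + cs F (complex_of_real (- n)) (L n x)"
    using LL[OF Z0 assms(3), of x] assms(4) by (simp add: diff_eq_eq add.commute)
  then show "L 0 (L n x) = cs F (complex_of_real (h - n)) (L n x)"
    using assms(1) by (simp add: lin_facts(2)[OF linL] cs_comb vs.scale_left_diff_distrib)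
  have "L n (J 0 x) = J 0 (L n x)" using N2_LJ[OF N2 assms(3) Z0, of x] by (simp add: vs.scale_zero_left power2_eq_square)
  then show "J 0 (L n x) = cs F (complex_of_real p) (L n x)" using assms(2) by (simp add: lin_facts(2)[OF linL])
qed

lemma sh_J:
  assumes "L 0 x = cs F (complex_of_real h) x" "J 0 x = cs F (complex_of_real p) x" "n \<in> \<int>" "n \<noteq> 0"
  shows "L 0 (J n x) = cs F (complex_of_real (h - n)) (J n x)" "J 0 (J n x) = cs F (complex_of_real p) (J n x)"
proof -
  have "L 0 (J n x) = J n (L 0 x) + cs F (complex_of_real (- n)) (J n x)"
    using N2_LJ[OF N2 Z0 assms(3), of x] by simp
  then show "L 0 (J n x) = cs F (complex_of_real (h - n)) (J n x)"
    using assms(1) by (simp add: lin_facts(2)[OF linJ] cs_comb vs.scale_left_diff_distrib)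
  have "J 0 (J n x) = J n (J 0 x)" using N2_JJ[OF N2 Z0 assms(3), of x] assms(4) by simp
  then show "J 0 (J n x) = cs F (complex_of_real p) (J n x)" using assms(2) by (simp add: lin_facts(2)[OF linJ])
qed

lemma sh_P:
  assumes "L 0 x = cs F (complex_of_real h) x" "J 0 x = cs F (complex_of_real p) x" "r \<in> hZ"
  shows "L 0 (P r x) = cs F (complex_of_real (h - r)) (P r x)" "J 0 (P r x) = cs F (complex_of_real (p + 1)) (P r x)"
proof -
  have "L 0 (P r x) = P r (L 0 x) + cs F (complex_of_real (- r)) (P r x)"
    using N2_LP[OF N2 Z0 assms(3), of x] by simp
  then show "L 0 (P r x) = cs F (complex_of_real (h - r)) (P r x)"
    using assms(1) by (simp add: lin_facts(2)[OF linP] cs_comb vs.scale_left_diff_distrib)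
  have "J 0 (P r x) = P r (J 0 x) + P r x" using N2_JP[OF N2 Z0 assms(3), of x] by simp
  then show "J 0 (P r x) = cs F (complex_of_real (p + 1)) (P r x)" using assms(2) by (simp add: lin_facts(2)[OF linP] cs_comb1)
qed

lemma sh_M:
  assumes "L 0 x = cs F (complex_of_real h) x" "J 0 x = cs F (complex_of_real p) x" "r \<in> hZ"
  shows "L 0 (M r x) = cs F (complex_of_real (h - r)) (M r x)" "J 0 (M r x) = cs F (complex_of_real (p - 1)) (M r x)"
proof -
  have "L 0 (M r x) = M r (L 0 x) + cs F (complex_of_real (- r)) (M r x)"
    using N2_LM[OF N2 Z0 assms(3), of x] by simp
  then show "L 0 (M r x) = cs F (complex_of_real (h - r)) (M r x)"
    using assms(1) by (simp add: lin_facts(2)[OF linM] cs_comb vs.scale_left_diff_distrib)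
  have "J 0 (M r x) = M r (J 0 x) - M r x" using N2_JM[OF N2 Z0 assms(3), of x] by simp
  then show "J 0 (M r x) = cs F (complex_of_real (p - 1)) (M r x)" using assms(2) by (simp add: lin_facts(2)[OF linM] cs_comb2)
qed

lemma primary:
  assumes "L 0 x = cs F (complex_of_real h) x" "J 0 x = cs F (complex_of_real p) x" "h = p/2"
  shows "(\<forall>n\<in>\<int>. n \<ge> 1 \<longrightarrow> L n x = 0 \<and> J n x = 0)"
    "(\<forall>r\<in>hZ. r \<ge> 1/2 \<longrightarrow> P r x = 0 \<and> M r x = 0)" "P (-(1/2)) x = 0"
proof -
  show "\<forall>n\<in>\<int>. n \<ge> 1 \<longrightarrow> L n x = 0 \<and> J n x = 0"
  proof (intro ballI impI conjI)
    fix n :: real assume n: "n \<in> \<int>" "n \<ge> 1"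
    show "L n x = 0"
    proof (rule ccontr)
      assume "L n x \<noteq> 0"
      from ubound[OF this sh_L[OF assms(1,2) n(1)]] n assms(3) show False by auto
    qed
    show "J n x = 0"
    proof (rule ccontr)
      assume "J n x \<noteq> 0"
      from ubound[OF this sh_J[OF assms(1,2) n(1)]] n assms(3) show False by auto
    qed
  qed
  show "\<forall>r\<in>hZ. r \<ge> 1/2 \<longrightarrow> P r x = 0 \<and> M r x = 0"
  proof (intro ballI impI conjI)
    fix r :: real assume r: "r \<in> hZ" "r \<ge> 1/2"
    show "P r x = 0"
    proof (rule ccontr)
      assume "P r x \<noteq> 0"
      from ubound[OF this sh_P[OF assms(1,2) r(1)]] r assms(3) show False by auto
    qed
    show "M r x = 0"
    proof (cases "r = 1/2")
      case True then show ?thesis using harm[OF assms] by (simp only:)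
    next
      case False
      show ?thesis
      proof (rule ccontr)
        assume "M r x \<noteq> 0"
        from ubound[OF this sh_M[OF assms(1,2) r(1)]] r assms(3) False show False by auto
      qed
    qed
  qed
  show "P (-(1/2)) x = 0" using harm[OF assms] by simp
qed

end
end


context U begin

lemma LLh0: "\<forall>m\<in>\<int>. \<forall>n\<in>\<int>. \<forall>v. Lm F m (Lm F n v) - Lm F n (Lm F m v)
        = cs F (complex_of_real (m - n)) (Lm F (m + n) v) + (if m + n = 0 then cs F (complex_of_real (cch F / 12 * (m ^ 3 - m))) (v) else 0)"
  using FV unfolding full_VOSA_def by (elim conjE) assumption
lemma LLb0: "\<forall>m\<in>\<int>. \<forall>n\<in>\<int>. \<forall>v. Lbm F m (Lbm F n v) - Lbm F n (Lbm F m v)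
        = cs F (complex_of_real (m - n)) (Lbm F (m + n) v) + (if m + n = 0 then cs F (complex_of_real (ccb F / 12 * (m ^ 3 - m))) (v) else 0)"
  using FV unfolding full_VOSA_def by (elim conjE) assumption
lemma LLh: "m \<in> \<int> \<Longrightarrow> n \<in> \<int> \<Longrightarrow> Lm F m (Lm F n v) - Lm F n (Lm F m v)
        = cs F (complex_of_real (m - n)) (Lm F (m + n) v) + (if m + n = 0 then cs F (complex_of_real (cch F / 12 * (m ^ 3 - m))) (v) else 0)"
  using LLh0 by blast
lemma LLb: "m \<in> \<int> \<Longrightarrow> n \<in> \<int> \<Longrightarrow> Lbm F m (Lbm F n v) - Lbm F n (Lbm F m v)
        = cs F (complex_of_real (m - n)) (Lbm F (m + n) v) + (if m + n = 0 then cs F (complex_of_real (ccb F / 12 * (m ^ 3 - m))) (v) else 0)"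
  using LLb0 by blast

lemmas primH = primary[OF N2h hadj(1) hadj(2) mode_lin(1) mode_lin(5) mode_lin(3) mode_lin(4) LLh0]
lemmas primB = primary[OF N2b hadj(3) hadj(4) mode_lin(2) mode_lin(8) mode_lin(6) mode_lin(7) LLb0]
lemmas ubH = ubound[OF N2h hadj(1) hadj(2) mode_lin(1) mode_lin(5) mode_lin(3) mode_lin(4) LLh0]
lemmas ubB = ubound[OF N2b hadj(3) hadj(4) mode_lin(2) mode_lin(8) mode_lin(6) mode_lin(7) LLb0]

definition JE :: "'v \<Rightarrow> real \<Rightarrow> real \<Rightarrow> real \<Rightarrow> real \<Rightarrow> bool" where
  "JE x h hb p q \<longleftrightarrow> Lm F 0 x = cs F (complex_of_real h) x \<and> Lbm F 0 x = cs F (complex_of_real hb) x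
     \<and> Jm F 0 x = cs F (complex_of_real p) x \<and> Jbm F 0 x = cs F (complex_of_real q) x"

lemma JE_nonneg: assumes "JE x h hb p q" "x \<noteq> 0" shows "p/2 \<le> h" "q/2 \<le> hb"
  using ubH[of x h p] ubB[of x hb q] assms unfolding JE_def by auto

lemma JE_Ccc: assumes "JE x h hb p q" "h = p/2" "hb = q/2" shows "x \<in> Ccc F p q"
proof -
  have a: "Lm F 0 x = cs F (complex_of_real h) x" "Jm F 0 x = cs F (complex_of_real p) x"
    "Lbm F 0 x = cs F (complex_of_real hb) x" "Jbm F 0 x = cs F (complex_of_real q) x"
    using assms(1) unfolding JE_def by auto
  note H = primH[OF a(1,2) assms(2)] and B = primB[OF a(3,4) assms(3)]
  show ?thesis unfolding Ccc_def using a H B by auto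
qed

definition dst :: "'v \<Rightarrow> 'v" where "dst v = Gm F (1/2) v + Gbm F (1/2) v"
definition Lap :: "'v \<Rightarrow> 'v" where
  "Lap v = (Lm F 0 v - cs F (1/2) (Jm F 0 v)) + (Lbm F 0 v - cs F (1/2) (Jbm F 0 v))"

lemmas madd = lin_facts(1)[OF mode_lin(1)] lin_facts(1)[OF mode_lin(2)] lin_facts(1)[OF mode_lin(3)]
  lin_facts(1)[OF mode_lin(4)] lin_facts(1)[OF mode_lin(5)] lin_facts(1)[OF mode_lin(6)]
  lin_facts(1)[OF mode_lin(7)] lin_facts(1)[OF mode_lin(8)]
lemmas mscale = lin_facts(2)[OF mode_lin(1)] lin_facts(2)[OF mode_lin(2)] lin_facts(2)[OF mode_lin(3)]
  lin_facts(2)[OF mode_lin(4)] lin_facts(2)[OF mode_lin(5)] lin_facts(2)[OF mode_lin(6)]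
  lin_facts(2)[OF mode_lin(7)] lin_facts(2)[OF mode_lin(8)]

lemma d_lin: "Vector_Spaces.linear (cs F) (cs F) (dop F)"
  unfolding Vector_Spaces.linear_iff dop_def using vs by (simp add: madd mscale vs.scale_right_distrib algebra_simps)
lemma dst_lin: "Vector_Spaces.linear (cs F) (cs F) dst"
  unfolding Vector_Spaces.linear_iff dst_def using vs by (simp add: madd mscale vs.scale_right_distrib algebra_simps)
lemma Lap_lin: "Vector_Spaces.linear (cs F) (cs F) Lap"
  unfolding Vector_Spaces.linear_iff Lap_def using vs
  by (simp add: madd mscale vs.scale_right_distrib vs.scale_right_diff_distrib vs.scale_left_commute algebra_simps)

lemma herm_d: "herm u (dop F v) = herm (dst u) v"
  unfolding dop_def dst_def by (simp add: herm2 herm1 hadj)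
lemma herm_dst: "herm u (dst v) = herm (dop F u) v"
  unfolding dop_def dst_def by (simp add: herm2 herm1 hadj)

lemma double0: fixes y :: 'v assumes "y + y = 0" shows "y = 0"
proof -
  have "y = cs F (1/2) (y + y)" by (simp add: vs.scale_right_distrib vs.scale_left_distrib[symmetric])
  then show ?thesis using assms by simp
qed

lemma dd: "dop F (dop F x) = 0"
proof -
  have a: "Gp F (-(1/2)) (Gp F (-(1/2)) x) = 0" using N2_PP[OF N2h hZ_simps(2) hZ_simps(2)] double0 by blast
  have b: "Gbp F (-(1/2)) (Gbp F (-(1/2)) x) = 0" using N2_PP[OF N2b hZ_simps(2) hZ_simps(2)] double0 by blast
  have c: "Gp F (-(1/2)) (Gbp F (-(1/2)) x) + Gbp F (-(1/2)) (Gp F (-(1/2)) x) = 0"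
    using comm_oo[OF mem_hol(1)[OF hZ_simps(2)] mem_ahol(1)[OF hZ_simps(2)]] by blast
  have "dop F (dop F x) = Gp F (-(1/2)) (Gp F (-(1/2)) x) + Gbp F (-(1/2)) (Gbp F (-(1/2)) x)
      + (Gp F (-(1/2)) (Gbp F (-(1/2)) x) + Gbp F (-(1/2)) (Gp F (-(1/2)) x))"
    unfolding dop_def by (simp add: madd algebra_simps)
  then show ?thesis using a b c by simp
qed

lemma Lap_eq: "dop F (dst y) + dst (dop F y) = Lap y"
proof -
  have h: "Gp F (-(1/2)) (Gm F (1/2) y) + Gm F (1/2) (Gp F (-(1/2)) y) = Lm F 0 y - cs F (1/2) (Jm F 0 y)"
    using N2_PM[OF N2h hZ_simps(2) hZ_simps(3), of y] by (simp add: vs.scale_zero_left power2_eq_square vs.scale_minus_left)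
  have b: "Gbp F (-(1/2)) (Gbm F (1/2) y) + Gbm F (1/2) (Gbp F (-(1/2)) y) = Lbm F 0 y - cs F (1/2) (Jbm F 0 y)"
    using N2_PM[OF N2b hZ_simps(2) hZ_simps(3), of y] by (simp add: vs.scale_zero_left power2_eq_square vs.scale_minus_left)
  have c1: "Gp F (-(1/2)) (Gbm F (1/2) y) + Gbm F (1/2) (Gp F (-(1/2)) y) = 0"
    using comm_oo[OF mem_hol(1)[OF hZ_simps(2)] mem_ahol(2)[OF hZ_simps(3)]] by blast
  have c2: "Gm F (1/2) (Gbp F (-(1/2)) y) + Gbp F (-(1/2)) (Gm F (1/2) y) = 0"
    using comm_oo[OF mem_hol(2)[OF hZ_simps(3)] mem_ahol(1)[OF hZ_simps(2)]] by blast
  have "dop F (dst y) + dst (dop F y) =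
      (Gp F (-(1/2)) (Gm F (1/2) y) + Gm F (1/2) (Gp F (-(1/2)) y))
    + (Gbp F (-(1/2)) (Gbm F (1/2) y) + Gbm F (1/2) (Gbp F (-(1/2)) y))
    + (Gp F (-(1/2)) (Gbm F (1/2) y) + Gbm F (1/2) (Gp F (-(1/2)) y))
    + (Gm F (1/2) (Gbp F (-(1/2)) y) + Gbp F (-(1/2)) (Gm F (1/2) y))"
    unfolding dop_def dst_def by (simp add: madd algebra_simps)
  then show ?thesis unfolding Lap_def using h b c1 c2 by simp
qed

lemma Lap_JE: assumes "JE x h hb p q" shows "Lap x = cs F (complex_of_real ((h - p/2) + (hb - q/2))) x"
  using assms unfolding JE_def Lap_def
  by (simp add: vs.scale_scale vs.scale_left_distrib vs.scale_left_diff_distrib algebra_simps)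

end


context U begin

lemma indep_step:
  assumes lin: "Vector_Spaces.linear (cs F) (cs F) T" and a: "a \<notin> S" "finite S"
    and eig: "\<forall>x\<in>insert a S. T (g x) = cs F (complex_of_real (f x)) (g x)"
    and s: "sum g (insert a S) = 0"
  shows "sum (\<lambda>x. cs F (complex_of_real (f x - f a)) (g x)) S = 0"
    "\<forall>x\<in>S. T (cs F (complex_of_real (f x - f a)) (g x)) = cs F (complex_of_real (f x)) (cs F (complex_of_real (f x - f a)) (g x))"
proof -
  have ga: "g a = - sum g S" using s a by (simp add: sum.insert eq_neg_iff_add_eq_0)
  have "sum (\<lambda>x. cs F (complex_of_real (f x - f a)) (g x)) S = sum (\<lambda>x. T (g x) - cs F (complex_of_real (f a)) (g x)) S"
    using eig by (intro sum.cong) (auto simp: vs.scale_left_diff_distrib)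
  also have "\<dots> = T (sum g S) - cs F (complex_of_real (f a)) (sum g S)"
    by (simp add: sum_subtractf lin_facts(6)[OF lin] vs.scale_sum_right)
  also have "\<dots> = 0" using eig ga by (simp add: lin_facts(4)[OF lin])
  finally show "sum (\<lambda>x. cs F (complex_of_real (f x - f a)) (g x)) S = 0" .
  show "\<forall>x\<in>S. T (cs F (complex_of_real (f x - f a)) (g x)) = cs F (complex_of_real (f x)) (cs F (complex_of_real (f x - f a)) (g x))"
    using eig by (simp add: lin_facts(2)[OF lin] vs.scale_left_commute)
qed

lemma indep1:
  assumes lin: "Vector_Spaces.linear (cs F) (cs F) T" and fin: "finite S"
  shows "(\<forall>p\<in>S. T (g p) = cs F (complex_of_real p) (g p)) \<Longrightarrow> sum g S = 0 \<Longrightarrow> \<forall>p\<in>S. g p = 0"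
  using fin
proof (induction S arbitrary: g rule: finite_induct)
  case empty then show ?case by simp
next
  case (insert a S)
  note st = indep_step[OF lin insert.hyps(2) insert.hyps(1), of g "\<lambda>x. x", OF insert.prems(1) insert.prems(2)]
  have "\<forall>p\<in>S. cs F (complex_of_real (p - a)) (g p) = 0" using insert.IH[OF st(2) st(1)] .
  then have z: "\<forall>p\<in>S. g p = 0" using insert.hyps(2) by auto
  then have "sum g S = 0" by simp
  then have "g a = 0" using insert.prems(2) insert.hyps by simp
  then show ?case using z by simp
qed

lemma indep2:
  assumes linA: "Vector_Spaces.linear (cs F) (cs F) A" and linB: "Vector_Spaces.linear (cs F) (cs F) B"
    and fin: "finite S"
  shows "(\<forall>x\<in>S. A (g x) = cs F (complex_of_real (fst x)) (g x) \<and> B (g x) = cs F (complex_of_real (snd x)) (g x))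
     \<Longrightarrow> sum g S = 0 \<Longrightarrow> \<forall>x\<in>S. g x = 0"
  using fin
proof (induction S arbitrary: g rule: finite_induct)
  case empty then show ?case by simp
next
  case (insert a S)
  have eA: "\<forall>x\<in>insert a S. A (g x) = cs F (complex_of_real (fst x)) (g x)"
   and eB: "\<forall>x\<in>insert a S. B (g x) = cs F (complex_of_real (snd x)) (g x)" using insert.prems(1) by auto
  note stA = indep_step[OF linA insert.hyps(2) insert.hyps(1) eA insert.prems(2)]
  note stB = indep_step[OF linB insert.hyps(2) insert.hyps(1) eB insert.prems(2)]
  have zA: "\<forall>x\<in>S. cs F (complex_of_real (fst x - fst a)) (g x) = 0"
  proof (rule insert.IH[OF _ stA(1)], intro ballI conjI)
    fix x assume "x \<in> S"
    then show "A (cs F (complex_of_real (fst x - fst a)) (g x)) = cs F (complex_of_real (fst x)) (cs F (complex_of_real (fst x - fst a)) (g x))"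
      using stA(2) by blast
    show "B (cs F (complex_of_real (fst x - fst a)) (g x)) = cs F (complex_of_real (snd x)) (cs F (complex_of_real (fst x - fst a)) (g x))"
      using eB \<open>x \<in> S\<close> by (simp add: lin_facts(2)[OF linB] vs.scale_left_commute)
  qed
  have zB: "\<forall>x\<in>S. cs F (complex_of_real (snd x - snd a)) (g x) = 0"
  proof (rule insert.IH[OF _ stB(1)], intro ballI conjI)
    fix x assume "x \<in> S"
    then show "B (cs F (complex_of_real (snd x - snd a)) (g x)) = cs F (complex_of_real (snd x)) (cs F (complex_of_real (snd x - snd a)) (g x))"
      using stB(2) by blast
    show "A (cs F (complex_of_real (snd x - snd a)) (g x)) = cs F (complex_of_real (fst x)) (cs F (complex_of_real (snd x - snd a)) (g x))"
      using eA \<open>x \<in> S\<close> by (simp add: lin_facts(2)[OF linA] vs.scale_left_commute)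
  qed
  have z: "\<forall>x\<in>S. g x = 0"
  proof
    fix x assume x: "x \<in> S"
    then have "x \<noteq> a" using insert.hyps(2) by auto
    then have "fst x \<noteq> fst a \<or> snd x \<noteq> snd a" by (simp add: prod_eq_iff)
    then show "g x = 0" using zA zB x by auto
  qed
  then have "sum g S = 0" by simp
  then have "g a = 0" using insert.prems(2) insert.hyps by simp
  then show ?case using z by simp
qed

lemma inherit:
  assumes linT: "Vector_Spaces.linear (cs F) (cs F) T" and linA: "Vector_Spaces.linear (cs F) (cs F) A"
    and fin: "finite S" and eig: "\<forall>p\<in>S. T (g p) = cs F (complex_of_real p) (g p)" and v: "v = sum g S"
    and com: "\<And>y. A (T y) = T (A y)" and Av: "A v = cs F a v"
  shows "\<forall>p\<in>S. A (g p) = cs F a (g p)"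
proof -
  let ?g = "\<lambda>p. A (g p) - cs F a (g p)"
  have e: "\<forall>p\<in>S. T (?g p) = cs F (complex_of_real p) (?g p)"
  proof
    fix p assume "p \<in> S"
    then have "T (?g p) = A (cs F (complex_of_real p) (g p)) - cs F a (cs F (complex_of_real p) (g p))"
      using eig com[of "g p", symmetric] by (simp add: lin_facts(5)[OF linT] lin_facts(2)[OF linT])
    also have "\<dots> = cs F (complex_of_real p) (?g p)"
      by (simp add: lin_facts(2)[OF linA] vs.scale_left_commute vs.scale_right_diff_distrib)
    finally show "T (?g p) = cs F (complex_of_real p) (?g p)" .
  qed
  have "sum ?g S = A v - cs F a v" using v by (simp add: sum_subtractf lin_facts(6)[OF linA] vs.scale_sum_right)
  then have "sum ?g S = 0" using Av by simp
  then show ?thesis using indep1[OF linT fin e] by simp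
qed

end


lemma total_eq: assumes "finite T" "{pq. f pq \<noteq> 0} \<subseteq> T" shows "total f = sum f T"
  unfolding total_def by (rule sum.mono_neutral_left[OF assms]) auto

context U begin

lemma Ccc_zero: "0 \<in> Ccc F p q"
  unfolding Ccc_def by (simp add: mzero)

lemma Ccc_add: assumes "x \<in> Ccc F p q" "y \<in> Ccc F p q" shows "x + y \<in> Ccc F p q"
  using assms unfolding Ccc_def by (simp add: madd vs.scale_right_distrib)

lemma Ccc_scale: assumes "x \<in> Ccc F p q" shows "cs F c x \<in> Ccc F p q"
  using assms unfolding Ccc_def by (simp add: mscale vs.scale_left_commute)

lemma Ccc_neg: assumes "x \<in> Ccc F p q" shows "- x \<in> Ccc F p q"
  using Ccc_scale[OF assms, of "-1"] by simp

lemma Ccc_diff: assumes "x \<in> Ccc F p q" "y \<in> Ccc F p q" shows "x - y \<in> Ccc F p q"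
  using Ccc_add[OF assms(1) Ccc_neg[OF assms(2)]] by simp

lemma CCsum_fin: "f \<in> CCsum F \<Longrightarrow> finite {pq. f pq \<noteq> 0}" unfolding CCsum_def by blast
lemma CCsum_mem: "f \<in> CCsum F \<Longrightarrow> f pq \<in> Ccc F (fst pq) (snd pq)"
  unfolding CCsum_def by (cases pq) auto

lemma CCsum_add: assumes "f \<in> CCsum F" "g \<in> CCsum F" shows "(\<lambda>pq. f pq + g pq) \<in> CCsum F"
proof -
  have "{pq. f pq + g pq \<noteq> 0} \<subseteq> {pq. f pq \<noteq> 0} \<union> {pq. g pq \<noteq> 0}" by auto
  then have "finite {pq. f pq + g pq \<noteq> 0}" using CCsum_fin[OF assms(1)] CCsum_fin[OF assms(2)] finite_subset by blast
  then show ?thesis using assms unfolding CCsum_def by (auto intro: Ccc_add)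
qed

lemma CCsum_diff: assumes "f \<in> CCsum F" "g \<in> CCsum F" shows "(\<lambda>pq. f pq - g pq) \<in> CCsum F"
proof -
  have "{pq. f pq - g pq \<noteq> 0} \<subseteq> {pq. f pq \<noteq> 0} \<union> {pq. g pq \<noteq> 0}" by auto
  then have "finite {pq. f pq - g pq \<noteq> 0}" using CCsum_fin[OF assms(1)] CCsum_fin[OF assms(2)] finite_subset by blast
  then show ?thesis using assms unfolding CCsum_def by (auto intro: Ccc_diff)
qed

lemma CCsum_scale: assumes "f \<in> CCsum F" shows "(\<lambda>pq. cs F c (f pq)) \<in> CCsum F"
proof -
  have "{pq. cs F c (f pq) \<noteq> 0} \<subseteq> {pq. f pq \<noteq> 0}" by auto
  then have "finite {pq. cs F c (f pq) \<noteq> 0}" using CCsum_fin[OF assms(1)] finite_subset by blast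
  then show ?thesis using assms unfolding CCsum_def by (auto intro: Ccc_scale)
qed

lemma CCsum_zero: "(\<lambda>pq. 0) \<in> CCsum F" unfolding CCsum_def by (simp add: Ccc_zero)

lemma CCsum_single: assumes "x \<in> Ccc F p q" shows "(\<lambda>pq. if pq = (p, q) then x else 0) \<in> CCsum F"
proof -
  have "{pq. (if pq = (p, q) then x else 0) \<noteq> 0} \<subseteq> {(p, q)}" by auto
  then have "finite {pq. (if pq = (p, q) then x else 0) \<noteq> 0}" using finite_subset by blast
  then show ?thesis using assms unfolding CCsum_def by (auto simp: Ccc_zero)
qed

lemma total_add: assumes "finite {pq. f pq \<noteq> 0}" "finite {pq. g pq \<noteq> 0}"
  shows "total (\<lambda>pq. f pq + g pq) = total f + total g"
proof -
  let ?T = "{pq. f pq \<noteq> 0} \<union> {pq. g pq \<noteq> 0}"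
  have "total (\<lambda>pq. f pq + g pq) = sum (\<lambda>pq. f pq + g pq) ?T" by (rule total_eq) (use assms in auto)
  also have "\<dots> = sum f ?T + sum g ?T" by (simp add: sum.distrib)
  also have "sum f ?T = total f" by (rule total_eq[symmetric]) (use assms in auto)
  also have "sum g ?T = total g" by (rule total_eq[symmetric]) (use assms in auto)
  finally show ?thesis .
qed

lemma total_diff: assumes "finite {pq. f pq \<noteq> 0}" "finite {pq. g pq \<noteq> 0}"
  shows "total (\<lambda>pq. f pq - g pq) = total f - total g"
proof -
  let ?T = "{pq. f pq \<noteq> 0} \<union> {pq. g pq \<noteq> 0}"
  have "total (\<lambda>pq. f pq - g pq) = sum (\<lambda>pq. f pq - g pq) ?T" by (rule total_eq) (use assms in auto)
  also have "\<dots> = sum f ?T - sum g ?T" by (simp add: sum_subtractf)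
  also have "sum f ?T = total f" by (rule total_eq[symmetric]) (use assms in auto)
  also have "sum g ?T = total g" by (rule total_eq[symmetric]) (use assms in auto)
  finally show ?thesis .
qed

lemma total_scale: assumes "finite {pq. f pq \<noteq> 0}"
  shows "total (\<lambda>pq. cs F c (f pq)) = cs F c (total f)"
proof -
  have "total (\<lambda>pq. cs F c (f pq)) = sum (\<lambda>pq. cs F c (f pq)) {pq. f pq \<noteq> 0}" by (rule total_eq) (use assms in auto)
  also have "\<dots> = cs F c (total f)" unfolding total_def by (simp add: vs.scale_sum_right)
  finally show ?thesis .
qed

lemma total_single: "total (\<lambda>pq. if pq = (p, q) then x else 0) = x"
  by (subst total_eq[of "{(p,q)}"]) auto

lemmas d_add = lin_facts(1)[OF d_lin] and d_scale = lin_facts(2)[OF d_lin] and d_zero = lin_facts(3)[OF d_lin]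
  and d_neg = lin_facts(4)[OF d_lin] and d_diff = lin_facts(5)[OF d_lin] and d_sum = lin_facts(6)[OF d_lin]
lemmas dst_add = lin_facts(1)[OF dst_lin] and dst_zero = lin_facts(3)[OF dst_lin]
  and dst_diff = lin_facts(5)[OF dst_lin] and dst_sum = lin_facts(6)[OF dst_lin]
lemmas Lap_add = lin_facts(1)[OF Lap_lin] and Lap_scale = lin_facts(2)[OF Lap_lin] and Lap_zero = lin_facts(3)[OF Lap_lin]

lemma Ccc_d: "x \<in> Ccc F p q \<Longrightarrow> dop F x = 0" unfolding Ccc_def dop_def by simp
lemma Ccc_dst: "x \<in> Ccc F p q \<Longrightarrow> dst x = 0" unfolding Ccc_def dst_def using hZ_simps(3) by auto

lemma total_closed: assumes "f \<in> CCsum F" shows "dop F (total f) = 0" "dst (total f) = 0"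
proof -
  show "dop F (total f) = 0" unfolding total_def d_sum by (intro sum.neutral ballI) (rule Ccc_d[OF CCsum_mem[OF assms]])
  show "dst (total f) = 0" unfolding total_def dst_sum by (intro sum.neutral ballI) (rule Ccc_dst[OF CCsum_mem[OF assms]])
qed

definition Q :: "'v \<Rightarrow> bool" where "Q v \<longleftrightarrow> (\<exists>f\<in>CCsum F. \<exists>y. v = total f + Lap y)"

lemma Q_zero: "Q 0" unfolding Q_def using CCsum_zero by (intro bexI[of _ "\<lambda>pq. 0"] exI[of _ 0]) (auto simp: total_def Lap_zero)

lemma Q_add: assumes "Q a" "Q b" shows "Q (a + b)"
proof -
  obtain f y where f: "f \<in> CCsum F" "a = total f + Lap y" using assms(1) unfolding Q_def by blast
  obtain g z where g: "g \<in> CCsum F" "b = total g + Lap z" using assms(2) unfolding Q_def by blast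
  have "a + b = total (\<lambda>pq. f pq + g pq) + Lap (y + z)"
    using f g by (simp add: total_add CCsum_fin Lap_add algebra_simps)
  then show ?thesis unfolding Q_def using CCsum_add[OF f(1) g(1)] by blast
qed

lemma Q_sum: "finite S \<Longrightarrow> (\<forall>x\<in>S. Q (g x)) \<Longrightarrow> Q (sum g S)"
  by (induction S rule: finite_induct) (auto simp: Q_zero Q_add)

lemma Q_JE: assumes "JE x h hb p q" shows "Q x"
proof (cases "x = 0")
  case True then show ?thesis using Q_zero by simp
next
  case False
  note nn = JE_nonneg[OF assms False]
  show ?thesis
  proof (cases "(h - p/2) + (hb - q/2) = 0")
    case True
    then have "h = p/2" "hb = q/2" using nn by auto
    then have c: "x \<in> Ccc F p q" using JE_Ccc[OF assms] by blast
    have "x = total (\<lambda>pq. if pq = (p, q) then x else 0) + Lap 0" by (simp add: total_single Lap_zero)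
    then show ?thesis unfolding Q_def using CCsum_single[OF c] by blast
  next
    case ne: False
    let ?l = "(h - p/2) + (hb - q/2)"
    have "(1 / ?l) * ?l = 1" using ne by simp
    then have one: "complex_of_real (1 / ?l) * complex_of_real ?l = 1" by (metis of_real_mult of_real_1)
    have "Lap (cs F (complex_of_real (1 / ?l)) x) = cs F (complex_of_real (1 / ?l)) (cs F (complex_of_real ?l) x)"
      by (simp only: Lap_scale Lap_JE[OF assms])
    also have "\<dots> = x" by (simp only: vs.scale_scale one vs.scale_one)
    finally have "Lap (cs F (complex_of_real (1 / ?l)) x) = x" .
    then have "x = total (\<lambda>pq. 0) + Lap (cs F (complex_of_real (1 / ?l)) x)" by (simp add: total_def)
    then show ?thesis unfolding Q_def using CCsum_zero by blast
  qed
qed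

lemma Z0r: "(0::real) \<in> \<int>" by simp

lemma comm_L0J0: "Lm F 0 (Jm F 0 y) = Jm F 0 (Lm F 0 y)"
  using N2_LJ[OF N2h Z0r Z0r, where v=y] by (simp add: vs.scale_zero_left)
lemma comm_Lb0Jb0: "Lbm F 0 (Jbm F 0 y) = Jbm F 0 (Lbm F 0 y)"
  using N2_LJ[OF N2b Z0r Z0r, where v=y] by (simp add: vs.scale_zero_left)

lemma Q_Fgr: assumes "u \<in> Fgr F h hb" shows "Q u"
proof -
  have u: "Lm F 0 u = cs F (complex_of_real h) u" "Lbm F 0 u = cs F (complex_of_real hb) u"
    using assms unfolding Fgr_def by auto
  obtain S k where S: "finite S" "\<forall>p\<in>S. Jm F 0 (k p) = cs F (complex_of_real p) (k p)" "u = sum k S"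
    using ssJ unfolding semisimple_real_def by blast
  have kL: "\<forall>p\<in>S. Lm F 0 (k p) = cs F (complex_of_real h) (k p)"
    by (rule inherit[OF mode_lin(5) mode_lin(1) S comm_L0J0 u(1)])
  have kLb: "\<forall>p\<in>S. Lbm F 0 (k p) = cs F (complex_of_real hb) (k p)"
    by (rule inherit[OF mode_lin(5) mode_lin(2) S _ u(2)])
       (rule comm_ee[OF mem_ehol(2)[OF Z0r] mem_eahol(1)[OF Z0r], symmetric])
  have "\<forall>p\<in>S. Q (k p)"
  proof
    fix p assume p: "p \<in> S"
    obtain T m where T: "finite T" "\<forall>q\<in>T. Jbm F 0 (m q) = cs F (complex_of_real q) (m q)" "k p = sum m T"
      using ssJb unfolding semisimple_real_def by blast
    have mL: "\<forall>q\<in>T. Lm F 0 (m q) = cs F (complex_of_real h) (m q)"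
      by (rule inherit[OF mode_lin(8) mode_lin(1) T _ ]) (use comm_ee[OF mem_ehol(1)[OF Z0r] mem_eahol(2)[OF Z0r]] kL p in auto)
    have mLb: "\<forall>q\<in>T. Lbm F 0 (m q) = cs F (complex_of_real hb) (m q)"
      by (rule inherit[OF mode_lin(8) mode_lin(2) T comm_Lb0Jb0]) (use kLb p in auto)
    have mJ: "\<forall>q\<in>T. Jm F 0 (m q) = cs F (complex_of_real p) (m q)"
      by (rule inherit[OF mode_lin(8) mode_lin(5) T _ ]) (use comm_ee[OF mem_ehol(2)[OF Z0r] mem_eahol(2)[OF Z0r]] S(2) p in auto)
    have "\<forall>q\<in>T. Q (m q)" using mL mLb mJ T(2) Q_JE unfolding JE_def by blast
    then show "Q (k p)" using Q_sum[OF T(1)] T(3) by simp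
  qed
  then show ?thesis using Q_sum[OF S(1)] S(3) by simp
qed

lemma Q_all: "Q v"
proof -
  obtain S g where "finite S" "\<forall>x\<in>S. g x \<in> Fgr F (fst x) (snd x)" "v = sum g S" using Fgr_dec by blast
  then show ?thesis using Q_sum Q_Fgr by blast
qed

end


context U begin

lemma imd_dop: "dop F z \<in> imd F" unfolding imd_def by simp
lemma imd_zero: "0 \<in> imd F" using imd_dop[of 0] d_zero by simp
lemma imd_add: "a \<in> imd F \<Longrightarrow> b \<in> imd F \<Longrightarrow> a + b \<in> imd F"
  unfolding imd_def by (auto simp: d_add[symmetric])
lemma imd_scale: "a \<in> imd F \<Longrightarrow> cs F c a \<in> imd F"
  unfolding imd_def by (auto simp: d_scale[symmetric])
lemma imd_neg: "a \<in> imd F \<Longrightarrow> - a \<in> imd F"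
  unfolding imd_def by (auto simp: d_neg[symmetric])
lemma imd_diff: "a \<in> imd F \<Longrightarrow> b \<in> imd F \<Longrightarrow> a - b \<in> imd F"
  using imd_add[OF _ imd_neg, of a b] by simp

lemma cls_mem: "x \<in> cls F x" unfolding cls_def using imd_zero by force

lemma cls_eq: assumes "a - b \<in> imd F" shows "cls F a = cls F b"
proof
  show "cls F a \<subseteq> cls F b"
  proof
    fix z assume "z \<in> cls F a"
    then obtain y where y: "y \<in> imd F" "z = a + y" unfolding cls_def by blast
    then have "z = b + ((a - b) + y)" by simp
    then show "z \<in> cls F b" unfolding cls_def using imd_add[OF assms y(1)] by blast
  qed
  show "cls F b \<subseteq> cls F a"
  proof
    fix z assume "z \<in> cls F b"
    then obtain y where y: "y \<in> imd F" "z = b + y" unfolding cls_def by blast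
    then have "z = a + (y - (a - b))" by simp
    then show "z \<in> cls F a" unfolding cls_def using imd_diff[OF y(1) assms] by blast
  qed
qed

lemma cls_inv: assumes "cls F a = cls F b" shows "a - b \<in> imd F"
proof -
  have "a \<in> cls F b" using cls_mem[of a] assms by simp
  then obtain y where "y \<in> imd F" "a = b + y" unfolding cls_def by blast
  then show ?thesis by simp
qed

lemma harm_zero: assumes "dst w = 0" "w \<in> imd F" shows "w = 0"
proof -
  obtain z where z: "w = dop F z" using assms(2) unfolding imd_def by blast
  have "herm w w = herm z (dst w)" using herm_dst[of z w] z by simp
  also have "\<dots> = 0" using assms(1) by (simp add: herm2)
  finally show ?thesis by (rule herm_self0)
qed

lemma cls_add: "cls F (a + b) = cset_add (cls F a) (cls F b)"
proof
  show "cls F (a + b) \<subseteq> cset_add (cls F a) (cls F b)"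
  proof
    fix z assume "z \<in> cls F (a + b)"
    then obtain y where y: "y \<in> imd F" "z = a + b + y" unfolding cls_def by blast
    have "a + y \<in> cls F a" "b \<in> cls F b" using y(1) cls_mem unfolding cls_def by auto
    moreover have "z = (a + y) + b" using y by (simp add: algebra_simps)
    ultimately show "z \<in> cset_add (cls F a) (cls F b)" unfolding cset_add_def by blast
  qed
  show "cset_add (cls F a) (cls F b) \<subseteq> cls F (a + b)"
  proof
    fix z assume "z \<in> cset_add (cls F a) (cls F b)"
    then obtain y1 y2 where y: "y1 \<in> imd F" "y2 \<in> imd F" "z = (a + y1) + (b + y2)"
      unfolding cset_add_def cls_def by blast
    then have "z = (a + b) + (y1 + y2)" by (simp add: algebra_simps)
    then show "z \<in> cls F (a + b)" unfolding cls_def using imd_add[OF y(1,2)] by blast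
  qed
qed

lemma cls_scale: "cls F (cs F c a) = cset_scale F c (cls F a)"
proof
  show "cls F (cs F c a) \<subseteq> cset_scale F c (cls F a)"
  proof
    fix z assume "z \<in> cls F (cs F c a)"
    then obtain y where y: "y \<in> imd F" "z = cs F c a + y" unfolding cls_def by blast
    then show "z \<in> cset_scale F c (cls F a)" unfolding cset_scale_def using cls_mem[of a] by blast
  qed
  show "cset_scale F c (cls F a) \<subseteq> cls F (cs F c a)"
  proof
    fix z assume "z \<in> cset_scale F c (cls F a)"
    then obtain y1 y where y: "y1 \<in> imd F" "y \<in> imd F" "z = cs F c (a + y1) + y"
      unfolding cset_scale_def cls_def by blast
    then have "z = cs F c a + (cs F c y1 + y)" by (simp add: vs.scale_right_distrib algebra_simps)
    then show "z \<in> cls F (cs F c a)" unfolding cls_def using imd_add[OF imd_scale[OF y(1)] y(2)] by blast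
  qed
qed

lemma ccmap_inj: "inj_on (ccmap F) (CCsum F)"
proof (rule inj_onI)
  fix f g assume f: "f \<in> CCsum F" and g: "g \<in> CCsum F" and e: "ccmap F f = ccmap F g"
  let ?e = "\<lambda>pq. f pq - g pq"
  have eC: "?e \<in> CCsum F" by (rule CCsum_diff[OF f g])
  have "total f - total g \<in> imd F" using e unfolding ccmap_def by (rule cls_inv)
  then have "total ?e \<in> imd F" by (simp add: total_diff CCsum_fin f g)
  then have t0: "total ?e = 0" using harm_zero total_closed(2)[OF eC] by blast
  have "\<forall>x\<in>{pq. ?e pq \<noteq> 0}. ?e x = 0"
  proof (rule indep2[OF mode_lin(5) mode_lin(8) CCsum_fin[OF eC]])
    show "\<forall>x\<in>{pq. ?e pq \<noteq> 0}. Jm F 0 (?e x) = cs F (complex_of_real (fst x)) (?e x) \<and>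
        Jbm F 0 (?e x) = cs F (complex_of_real (snd x)) (?e x)"
      using CCsum_mem[OF eC] unfolding Ccc_def by blast
    show "sum ?e {pq. ?e pq \<noteq> 0} = 0" using t0 unfolding total_def .
  qed
  then have "\<forall>pq. ?e pq = 0" by blast
  then show "f = g" by (auto simp: fun_eq_iff)
qed

lemma ccmap_img: "ccmap F ` CCsum F = Hcoh F"
proof
  show "ccmap F ` CCsum F \<subseteq> Hcoh F"
    unfolding Hcoh_def ccmap_def kerd_def using total_closed(1) by blast
  show "Hcoh F \<subseteq> ccmap F ` CCsum F"
  proof
    fix X assume "X \<in> Hcoh F"
    then obtain v where v: "dop F v = 0" "X = cls F v" unfolding Hcoh_def kerd_def by blast
    obtain f y where f: "f \<in> CCsum F" "v = total f + Lap y" using Q_all[of v] unfolding Q_def by blast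
    let ?z = "dop F y"
    have v': "dop F (Lap y) = 0" using v(1) f total_closed(1)[OF f(1)] by (simp add: d_add)
    have dz: "dst ?z = Lap y - dop F (dst y)" using Lap_eq[of y] by (simp add: algebra_simps)
    have "dop F (dst ?z) = 0" unfolding dz using v' by (simp add: d_diff dd)
    then have "herm (dst ?z) (dst ?z) = 0" using herm_dst[of "dst ?z" ?z] by (simp add: herm1)
    then have "dst ?z = 0" by (rule herm_self0)
    then have "Lap y = dop F (dst y)" using dz by simp
    then have "v - total f \<in> imd F" using f(2) imd_dop by simp
    then have "X = ccmap F f" unfolding ccmap_def using v(2) cls_eq by simp
    then show "X \<in> ccmap F ` CCsum F" using f(1) by blast
  qed
qed

end

theorem proposition2p11:
  fixes F :: "('v::ab_group_add) fvosa"
  assumes "unitary_N22_full_VOSA F"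
  shows "(\<forall>f\<in>CCsum F. total f \<in> kerd F)
       \<and> (\<forall>f\<in>CCsum F. \<forall>g\<in>CCsum F.
            ccmap F (\<lambda>pq. f pq + g pq) = cset_add (ccmap F f) (ccmap F g))
       \<and> (\<forall>f\<in>CCsum F. \<forall>c. ccmap F (\<lambda>pq. cs F c (f pq)) = cset_scale F c (ccmap F f))
       \<and> bij_betw (ccmap F) (CCsum F) (Hcoh F)"
proof -
  interpret U F by (rule U.intro) (rule assms)
  show ?thesis
  proof (intro conjI ballI allI)
    fix f assume "f \<in> CCsum F"
    then show "total f \<in> kerd F" unfolding kerd_def using total_closed(1) by blast
  next
    fix f g assume "f \<in> CCsum F" "g \<in> CCsum F"
    then show "ccmap F (\<lambda>pq. f pq + g pq) = cset_add (ccmap F f) (ccmap F g)"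
      unfolding ccmap_def by (simp add: total_add CCsum_fin cls_add)
  next
    fix f c assume "f \<in> CCsum F"
    then show "ccmap F (\<lambda>pq. cs F c (f pq)) = cset_scale F c (ccmap F f)"
      unfolding ccmap_def by (simp add: total_scale CCsum_fin cls_scale)
  next
    show "bij_betw (ccmap F) (CCsum F) (Hcoh F)" unfolding bij_betw_def using ccmap_inj ccmap_img by blast
  qed
qed


end
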